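(* If $H$ is a triangle-cactus, then $K_1\nabla H$ is a planar graph and $\phi(K_1\nabla H)=t(H)$.
   Context: For a graph $G$, $\phi(G)$ is the maximum number of pairwise edge-disjoint cycles in $G$; $t(H)$ is the number of triangles in $H$. A block is a maximal connected subgraph without cut vertices; a triangle-cactus is a connected graph each of whose blocks is a triangle. $K_1\nabla H$ is the graph obtained from $H$ by adding a new vertex adjacent to all vertices of $H$. *)

theory Defs
  imports "HOL-Analysis.Analysis"
begin

definition simple_graph :: "'a set \<Rightarrow> 'a set set \<Rightarrow> bool" where
  "simple_graph V E \<longleftrightarrow> finite V \<and> (\<forall>e\<in>E. \<exists>u v. u \<noteq> v \<and> u \<in> V \<and> v \<in> V \<and> e = {u, v})"

definition subgraph :: "'a set \<Rightarrow> 'a set set \<Rightarrow> 'a set \<Rightarrow> 'a set set \<Rightarrow> bool" where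
  "subgraph V' E' V E \<longleftrightarrow> V' \<subseteq> V \<and> E' \<subseteq> E \<and> (\<forall>e\<in>E'. e \<subseteq> V')"

definition connected_graph :: "'a set \<Rightarrow> 'a set set \<Rightarrow> bool" where
  "connected_graph V E \<longleftrightarrow> V \<noteq> {} \<and>
     (\<forall>u\<in>V. \<forall>v\<in>V. (\<lambda>x y. x \<in> V \<and> y \<in> V \<and> {x, y} \<in> E)\<^sup>*\<^sup>* u v)"

definition no_cut_vertex :: "'a set \<Rightarrow> 'a set set \<Rightarrow> bool" where
  "no_cut_vertex V E \<longleftrightarrow>
     (\<forall>v\<in>V. V - {v} = {} \<or> connected_graph (V - {v}) {e\<in>E. v \<notin> e})"

definition is_block :: "'a set \<Rightarrow> 'a set set \<Rightarrow> 'a set \<Rightarrow> 'a set set \<Rightarrow> bool" where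
  "is_block V E B F \<longleftrightarrow> subgraph B F V E \<and> connected_graph B F \<and> no_cut_vertex B F \<and>
     (\<forall>B' F'. subgraph B' F' V E \<and> connected_graph B' F' \<and> no_cut_vertex B' F' \<and>
        B \<subseteq> B' \<and> F \<subseteq> F' \<longrightarrow> B' = B \<and> F' = F)"

definition is_triangle_graph :: "'a set \<Rightarrow> 'a set set \<Rightarrow> bool" where
  "is_triangle_graph B F \<longleftrightarrow> (\<exists>a b c. a \<noteq> b \<and> b \<noteq> c \<and> a \<noteq> c \<and>
      B = {a, b, c} \<and> F = {{a, b}, {b, c}, {a, c}})"

definition triangle_cactus :: "'a set \<Rightarrow> 'a set set \<Rightarrow> bool" where
  "triangle_cactus V E \<longleftrightarrow> connected_graph V E \<and>
     (\<forall>B F. is_block V E B F \<longrightarrow> is_triangle_graph B F)"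

definition num_triangles :: "'a set \<Rightarrow> 'a set set \<Rightarrow> nat" where
  "num_triangles V E = card {T. T \<subseteq> V \<and> card T = 3 \<and> (\<forall>x\<in>T. \<forall>y\<in>T. x \<noteq> y \<longrightarrow> {x, y} \<in> E)}"

definition is_cycle :: "'a set set \<Rightarrow> 'a set set \<Rightarrow> bool" where
  "is_cycle E C \<longleftrightarrow> (\<exists>vs. 3 \<le> length vs \<and> distinct vs \<and>
     C = {{vs ! i, vs ! ((i + 1) mod length vs)} | i. i < length vs} \<and> C \<subseteq> E)"

definition phi :: "'a set \<Rightarrow> 'a set set \<Rightarrow> nat" where
  "phi V E = Max {card \<C> | \<C>. \<C> \<subseteq> {C. is_cycle E C} \<and> pairwise disjnt \<C>}"

definition join_K1_V :: "'a set \<Rightarrow> 'a option set" where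
  "join_K1_V V = insert None (Some ` V)"

definition join_K1_E :: "'a set \<Rightarrow> 'a set set \<Rightarrow> 'a option set set" where
  "join_K1_E V E = (image Some ` E) \<union> {{None, Some v} | v. v \<in> V}"

definition planar :: "'a set \<Rightarrow> 'a set set \<Rightarrow> bool" where
  "planar V E \<longleftrightarrow> (\<exists>(p :: 'a \<Rightarrow> complex) (\<gamma> :: 'a set \<Rightarrow> real \<Rightarrow> complex).
     inj_on p V \<and>
     (\<forall>e\<in>E. arc (\<gamma> e) \<and> {pathstart (\<gamma> e), pathfinish (\<gamma> e)} = p ` e) \<and>
     (\<forall>e\<in>E. \<forall>v\<in>V. p v \<in> path_image (\<gamma> e) \<longrightarrow> v \<in> e) \<and>
     (\<forall>e\<in>E. \<forall>e'\<in>E. e \<noteq> e' \<longrightarrow> path_image (\<gamma> e) \<inter> path_image (\<gamma> e') \<subseteq> p ` (e \<inter> e')))"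

end

theory Submission
  imports Defs
begin

definition gpath :: "'a set set \<Rightarrow> 'a list \<Rightarrow> bool" where
  "gpath E p \<longleftrightarrow> distinct p \<and> (\<forall>i. Suc i < length p \<longrightarrow> {p!i, p!Suc i} \<in> E)"

definition cyc_edges :: "'a list \<Rightarrow> 'a set set" where
  "cyc_edges vs = {{vs ! i, vs ! ((i + 1) mod length vs)} | i. i < length vs}"

lemma is_cycle_cyc: "is_cycle E C \<longleftrightarrow> (\<exists>vs. 3 \<le> length vs \<and> distinct vs \<and> C = cyc_edges vs \<and> C \<subseteq> E)"
  unfolding is_cycle_def cyc_edges_def by simp

lemma cyc_edges_sub: "cyc_edges vs \<subseteq> E \<longleftrightarrow> (\<forall>i<length vs. {vs ! i, vs ! ((i + 1) mod length vs)} \<in> E)"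
  unfolding cyc_edges_def by auto

lemma is_cycle_mono: "is_cycle E C \<Longrightarrow> E \<subseteq> E' \<Longrightarrow> is_cycle E' C"
  unfolding is_cycle_cyc by (metis order_trans)

lemma cyc_edges_3: "cyc_edges [x,y,z] = {{x,y},{y,z},{z,x}}"
proof -
  have g: "\<And>f n. {f i | i. i < (n::nat)} = f ` {..<n}" by blast
  show ?thesis unfolding cyc_edges_def g by (simp add: lessThan_Suc insert_commute)
qed

lemma path_close_cycle:
  assumes "gpath E p" "2 \<le> j" "j < length p" "{p!j, p!0} \<in> E"
  shows "distinct (take (Suc j) p) \<and> length (take (Suc j) p) = Suc j \<and>
         cyc_edges (take (Suc j) p) \<subseteq> E"
proof -
  let ?vs = "take (Suc j) p"
  have l: "length ?vs = Suc j" using assms by simp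
  have "\<forall>i<Suc j. {?vs ! i, ?vs ! ((i + 1) mod Suc j)} \<in> E"
  proof (intro allI impI)
    fix i assume i: "i < Suc j"
    show "{?vs ! i, ?vs ! ((i + 1) mod Suc j)} \<in> E"
    proof (cases "i = j")
      case True
      then show ?thesis using assms by (simp add: insert_commute)
    next
      case False
      then have "i + 1 < Suc j" using i by simp
      then show ?thesis using assms i unfolding gpath_def by simp
    qed
  qed
  then show ?thesis using assms l unfolding gpath_def cyc_edges_sub by simp
qed

lemma cycle_two_edges:
  assumes "3 \<le> length vs" "distinct vs" "x \<in> e" "e \<in> cyc_edges vs"
  shows "\<exists>e1\<in>cyc_edges vs. \<exists>e2\<in>cyc_edges vs. e1 \<noteq> e2 \<and> x \<in> e1 \<and> x \<in> e2"
proof -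
  let ?n = "length vs"
  obtain i where i: "i < ?n" "e = {vs ! i, vs ! ((i + 1) mod ?n)}" using assms unfolding cyc_edges_def by auto
  have n0: "0 < ?n" using assms(1) by linarith
  have "(i + 1) mod ?n < ?n" using n0 by simp
  then obtain j where j: "j < ?n" "x = vs ! j"
    using i assms(3) by blast
  define j' where "j' = (if j = 0 then ?n - 1 else j - 1)"
  have j'n: "j' < ?n" using j unfolding j'_def by auto
  have j'1: "(j' + 1) mod ?n = j" using j assms(1) unfolding j'_def by auto
  define e1 where "e1 = {vs ! j, vs ! ((j + 1) mod ?n)}"
  define e2 where "e2 = {vs ! j', vs ! ((j' + 1) mod ?n)}"
  have e1: "e1 \<in> cyc_edges vs" unfolding e1_def cyc_edges_def using j by blast
  have e2: "e2 \<in> cyc_edges vs" unfolding e2_def cyc_edges_def using j'n by blast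
  have ne: "(j + 1) mod ?n \<noteq> j'"
  proof
    assume h: "(j + 1) mod ?n = j'"
    show False
    proof (cases "j = 0")
      case True
      then show ?thesis using h assms(1) unfolding j'_def by simp
    next
      case False
      show ?thesis
      proof (cases "j + 1 < ?n")
        case True
        then show ?thesis using h False unfolding j'_def by simp
      next
        case F2: False
        then have "j + 1 = ?n" using j by simp
        then show ?thesis using h False assms(1) unfolding j'_def by simp
      qed
    qed
  qed
  have jn: "j \<noteq> j'" using j assms(1) unfolding j'_def by auto
  have "e1 \<noteq> e2"
  proof
    assume "e1 = e2"
    then have "vs ! ((j + 1) mod ?n) = vs ! j'"
      unfolding e1_def e2_def j'1 by (auto simp: doubleton_eq_iff)
    moreover have "(j + 1) mod ?n < ?n" using n0 by simp
    ultimately show False using ne assms(2) j'n by (simp add: nth_eq_iff_index_eq)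
  qed
  moreover have "x \<in> e1" "x \<in> e2" unfolding e1_def e2_def j'1 j by auto
  ultimately show ?thesis using e1 e2 by blast
qed

lemma rtranclp_sym:
  assumes "\<And>x y. R x y \<Longrightarrow> R y x" "R\<^sup>*\<^sup>* x y" shows "R\<^sup>*\<^sup>* y x"
  using assms(2) by (induction rule: rtranclp_induct) (auto intro: converse_rtranclp_into_rtranclp assms(1))

lemma walk_reach:
  assumes "\<forall>i. Suc i < length ws \<longrightarrow> {ws!i, ws!Suc i} \<in> F" "set ws \<subseteq> S" "i < length ws"
  shows "(\<lambda>x y. x \<in> S \<and> y \<in> S \<and> {x,y} \<in> F)\<^sup>*\<^sup>* (ws!0) (ws!i)"
  using assms(3)
proof (induction i)
  case 0 then show ?case by simp
next
  case (Suc i)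
  then have "(\<lambda>x y. x \<in> S \<and> y \<in> S \<and> {x,y} \<in> F)\<^sup>*\<^sup>* (ws!0) (ws!i)" by simp
  moreover have "ws!i \<in> S" "ws ! Suc i \<in> S" using Suc.prems assms(2) by auto
  ultimately show ?case using assms(1) Suc.prems by (auto intro: rtranclp.rtrancl_into_rtrancl)
qed

lemma walk_conn:
  assumes "\<forall>i. Suc i < length ws \<longrightarrow> {ws!i, ws!Suc i} \<in> F" "set ws = S" "ws \<noteq> []"
  shows "connected_graph S F"
proof -
  let ?R = "\<lambda>x y. x \<in> S \<and> y \<in> S \<and> {x,y} \<in> F"
  have sym: "\<And>x y. ?R x y \<Longrightarrow> ?R y x" by (simp add: insert_commute)
  have r: "\<And>x. x \<in> S \<Longrightarrow> ?R\<^sup>*\<^sup>* (ws!0) x"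
  proof -
    fix x assume "x \<in> S"
    then obtain i where i: "i < length ws" "x = ws ! i" using assms(2) by (auto simp: in_set_conv_nth)
    show "?R\<^sup>*\<^sup>* (ws!0) x" using walk_reach[OF assms(1) _ i(1)] assms(2) i(2) by simp
  qed
  show ?thesis unfolding connected_graph_def
  proof (intro conjI ballI)
    show "S \<noteq> {}" using assms by auto
    fix u v assume "u \<in> S" "v \<in> S"
    then have "?R\<^sup>*\<^sup>* (ws!0) u" "?R\<^sup>*\<^sup>* (ws!0) v" using r by auto
    moreover have "?R\<^sup>*\<^sup>* u (ws!0)" by (rule rtranclp_sym[of ?R, OF sym]) (use calculation in auto)
    ultimately show "?R\<^sup>*\<^sup>* u v" by (meson rtranclp_trans)
  qed
qed

lemma mod_shift_ne:
  fixes k j n :: nat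
  assumes "k < n" "0 < j" "j < n" shows "(k + j) mod n \<noteq> k"
proof (cases "k + j < n")
  case True then show ?thesis using assms by simp
next
  case False
  then have "(k + j) mod n = k + j - n" using assms by (simp add: le_mod_geq)
  then show ?thesis using assms False by arith
qed

lemma cyc_conn:
  assumes "3 \<le> length vs" "distinct vs"
  shows "connected_graph (set vs) (cyc_edges vs)"
proof (rule walk_conn[of vs])
  show "\<forall>i. Suc i < length vs \<longrightarrow> {vs ! i, vs ! Suc i} \<in> cyc_edges vs"
    unfolding cyc_edges_def by (metis (mono_tags, lifting) Suc_eq_plus1 Suc_lessD mem_Collect_eq mod_less)
qed (use assms in auto)

lemma cyc_ncv:
  assumes "3 \<le> length vs" "distinct vs"
  shows "no_cut_vertex (set vs) (cyc_edges vs)"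
  unfolding no_cut_vertex_def
proof (intro ballI disjI2)
  fix v assume "v \<in> set vs"
  then obtain k where k: "k < length vs" "vs ! k = v" by (meson in_set_conv_nth)
  let ?n = "length vs"
  define ws where "ws = take (?n - 1) (rotate (Suc k) vs)"
  have lws: "length ws = ?n - 1" unfolding ws_def by simp
  have nth: "ws ! i = vs ! ((i + Suc k) mod ?n)" if "i < ?n - 1" for i
  proof -
    have "ws ! i = rotate (Suc k) vs ! i" using that unfolding ws_def by (simp only: nth_take)
    also have "\<dots> = vs ! ((i + Suc k) mod ?n)" using that nth_rotate[of i vs "Suc k"] by (simp add: add.commute)
    finally show ?thesis .
  qed
  have dws: "distinct ws" unfolding ws_def using assms by simp
  have idx: "\<And>i. i < ?n - 1 \<Longrightarrow> (i + Suc k) mod ?n \<noteq> k"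
    using mod_shift_ne[of k ?n] k by (metis add.commute add_Suc_right zero_less_Suc less_diff_conv Suc_eq_plus1)
  have n0: "0 < ?n" using assms by linarith
  have notv: "\<And>i. i < ?n - 1 \<Longrightarrow> ws ! i \<noteq> v"
  proof
    fix i assume i: "i < ?n - 1" "ws ! i = v"
    then have "vs ! ((i + Suc k) mod ?n) = vs ! k" using nth k by simp
    moreover have "(i + Suc k) mod ?n < ?n" using n0 by simp
    ultimately have "(i + Suc k) mod ?n = k" using assms(2) k by (metis nth_eq_iff_index_eq)
    then show False using idx i by simp
  qed
  have sub: "set ws \<subseteq> set vs - {v}"
  proof
    fix x assume "x \<in> set ws"
    then obtain i where "i < ?n - 1" "x = ws ! i" using lws by (metis in_set_conv_nth)
    then show "x \<in> set vs - {v}" using nth notv n0 by auto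
  qed
  have "card (set ws) = card (set vs - {v})"
    using dws lws assms(2) \<open>v \<in> set vs\<close> by (simp add: distinct_card)
  then have sw: "set ws = set vs - {v}" using sub by (simp add: card_subset_eq)
  have cons: "\<forall>i. Suc i < length ws \<longrightarrow> {ws!i, ws!Suc i} \<in> {e \<in> cyc_edges vs. v \<notin> e}"
  proof (intro allI impI)
    fix i assume i: "Suc i < length ws"
    let ?m = "(i + Suc k) mod ?n"
    have "ws ! Suc i = vs ! ((?m + 1) mod ?n)" using nth[of "Suc i"] i lws by (simp add: mod_Suc_eq)
    moreover have "ws ! i = vs ! ?m" using nth i lws by simp
    moreover have "?m < ?n" using n0 by simp
    ultimately have "{ws!i, ws!Suc i} \<in> cyc_edges vs" unfolding cyc_edges_def by auto
    moreover have "v \<notin> {ws!i, ws!Suc i}" using notv i lws by (metis Suc_lessD empty_iff insertE)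
    ultimately show "{ws!i, ws!Suc i} \<in> {e \<in> cyc_edges vs. v \<notin> e}" by simp
  qed
  have "ws \<noteq> []" using lws assms by auto
  then show "connected_graph (set vs - {v}) {e \<in> cyc_edges vs. v \<notin> e}"
    using walk_conn[OF cons sw] by simp
qed

lemma simple_edge: "simple_graph V E \<Longrightarrow> e \<in> E \<Longrightarrow> \<exists>u v. u \<noteq> v \<and> u \<in> V \<and> v \<in> V \<and> e = {u, v}"
  unfolding simple_graph_def by blast

lemma simple_sub: "simple_graph V E \<Longrightarrow> e \<in> E \<Longrightarrow> e \<subseteq> V"
  using simple_edge by fastforce

lemma simple_pair: "simple_graph V E \<Longrightarrow> {u, v} \<in> E \<Longrightarrow> u \<noteq> v \<and> u \<in> V \<and> v \<in> V"
proof -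
  assume a: "simple_graph V E" "{u, v} \<in> E"
  then obtain x y where "x \<noteq> y" "x \<in> V" "y \<in> V" "{u,v} = {x,y}" using simple_edge by blast
  then show ?thesis by (auto simp: doubleton_eq_iff)
qed

lemma block_exists:
  assumes sg: "simple_graph V E" and "subgraph S F V E" "connected_graph S F" "no_cut_vertex S F"
  shows "\<exists>B F'. is_block V E B F' \<and> S \<subseteq> B \<and> F \<subseteq> F'"
proof -
  have fV: "finite V" using sg unfolding simple_graph_def by simp
  have EP: "E \<subseteq> Pow V" using simple_sub[OF sg] by blast
  have fE: "finite E" using fV EP finite_subset by blast
  define P where "P = (\<lambda>(B, F'). subgraph B F' V E \<and> connected_graph B F' \<and> no_cut_vertex B F' \<and> S \<subseteq> B \<and> F \<subseteq> F')"
  define f where "f = (\<lambda>(B::'a set, F'::'a set set). card B + card F')"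
  have P0: "P (S, F)" unfolding P_def using assms by simp
  have bnd: "\<forall>y. P y \<longrightarrow> f y < card V + card E + 1"
  proof (intro allI impI)
    fix y assume "P y"
    then obtain B F' where y: "y = (B, F')" "subgraph B F' V E" unfolding P_def by auto
    then have "card B \<le> card V" "card F' \<le> card E" using fV fE unfolding subgraph_def by (auto intro: card_mono)
    then show "f y < card V + card E + 1" unfolding f_def y by simp
  qed
  obtain z where z: "P z" "\<forall>y. P y \<longrightarrow> f y \<le> f z"
    using Lattices_Big.ex_has_greatest_nat[of P "(S,F)" f, OF P0 bnd] by blast
  obtain B F' where zB: "z = (B, F')" by fastforce
  have PB: "subgraph B F' V E" "connected_graph B F'" "no_cut_vertex B F'" "S \<subseteq> B" "F \<subseteq> F'"
    using z(1) unfolding zB P_def by auto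
  have "is_block V E B F'"
    unfolding is_block_def
  proof (intro conjI allI impI)
    fix B'' F'' assume h: "subgraph B'' F'' V E \<and> connected_graph B'' F'' \<and> no_cut_vertex B'' F'' \<and> B \<subseteq> B'' \<and> F' \<subseteq> F''"
    then have "P (B'', F'')" unfolding P_def using PB by auto
    then have le: "card B'' + card F'' \<le> card B + card F'" using z(2) unfolding zB f_def by fastforce
    have fin: "finite B''" "finite F''" using h fV fE unfolding subgraph_def by (auto intro: finite_subset)
    have "card B \<le> card B''" "card F' \<le> card F''" using h fin by (auto intro: card_mono)
    then have "card B = card B''" "card F' = card F''" using le by auto
    then show "B'' = B" "F'' = F'" using h fin card_subset_eq by metis+
  qed (use PB in auto)
  then show ?thesis using PB by blast
qed

lemma cactus_tri:
  assumes sg: "simple_graph V E" and tc: "triangle_cactus V E" and e: "{u, v} \<in> E"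
  shows "\<exists>w. {u, w} \<in> E \<and> {v, w} \<in> E \<and> w \<noteq> u \<and> w \<noteq> v"
proof -
  have uv: "u \<noteq> v" "u \<in> V" "v \<in> V" using simple_pair[OF sg e] by auto
  have sgr: "subgraph {u,v} {{u,v}} V E" unfolding subgraph_def using uv e by auto
  have con: "connected_graph {u,v} {{u,v}}"
    using walk_conn[of "[u,v]" "{{u,v}}" "{u,v}"] by (simp add: less_Suc_eq)
  have ncv: "no_cut_vertex {u,v} {{u,v}}"
    unfolding no_cut_vertex_def
  proof (intro ballI disjI2)
    fix x assume x: "x \<in> {u,v}"
    obtain y where y: "{u,v} - {x} = {y}" using x uv by (cases "x = u") auto
    show "connected_graph ({u,v} - {x}) {e \<in> {{u,v}}. x \<notin> e}"
      unfolding y using walk_conn[of "[y]" "{e \<in> {{u,v}}. x \<notin> e}" "{y}"] by simp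
  qed
  obtain B F' where b: "is_block V E B F'" "{u,v} \<subseteq> B" "{{u,v}} \<subseteq> F'"
    using block_exists[OF sg sgr con ncv] by blast
  then obtain a b c where t: "a \<noteq> b" "b \<noteq> c" "a \<noteq> c" "B = {a,b,c}" "F' = {{a,b},{b,c},{a,c}}"
    using tc unfolding triangle_cactus_def is_triangle_graph_def by blast
  have FE: "F' \<subseteq> E" using b(1) unfolding is_block_def subgraph_def by blast
  have "{u,v} \<in> F'" using b by simp
  then have "\<exists>w. {u, w} \<in> F' \<and> {v, w} \<in> F' \<and> w \<noteq> u \<and> w \<noteq> v"
    unfolding t using t uv by (auto simp: doubleton_eq_iff insert_commute)
  then show ?thesis using FE by blast
qed

lemma cactus_nocyc:
  assumes sg: "simple_graph V E" and tc: "triangle_cactus V E"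
    and vs: "distinct vs" "4 \<le> length vs" "cyc_edges vs \<subseteq> E"
  shows False
proof -
  have sV: "set vs \<subseteq> V"
  proof
    fix x assume "x \<in> set vs"
    then obtain i where i: "i < length vs" "x = vs ! i" by (auto simp: in_set_conv_nth)
    then have "{vs ! i, vs ! ((i + 1) mod length vs)} \<in> E" using vs(3) unfolding cyc_edges_sub by blast
    then show "x \<in> V" using i simple_sub[OF sg] by blast
  qed
  have eS: "\<forall>e\<in>cyc_edges vs. e \<subseteq> set vs"
  proof
    fix e assume "e \<in> cyc_edges vs"
    then obtain i where i: "i < length vs" "e = {vs ! i, vs ! ((i + 1) mod length vs)}" unfolding cyc_edges_def by blast
    have "0 < length vs" using i(1) by linarith
    then have "(i + 1) mod length vs < length vs" by simp
    then show "e \<subseteq> set vs" using i by auto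
  qed
  have sgr: "subgraph (set vs) (cyc_edges vs) V E" unfolding subgraph_def using sV vs eS by blast
  obtain B F' where b: "is_block V E B F'" "set vs \<subseteq> B"
    using block_exists[OF sg sgr cyc_conn cyc_ncv] vs by fastforce
  then obtain a b c where t: "B = {a,b,c}"
    using tc unfolding triangle_cactus_def is_triangle_graph_def by blast
  have "card (set vs) \<le> card B" using b t by (simp add: card_mono)
  moreover have "card B \<le> 3" unfolding t by (simp add: card_insert_le_m1)
  moreover have "card (set vs) = length vs" using vs by (simp add: distinct_card)
  ultimately show False using vs by simp
qed

inductive tcg :: "'a set \<Rightarrow> 'a set set \<Rightarrow> nat \<Rightarrow> bool" where
  base: "tcg {v} {} 0"
| step: "tcg V E k \<Longrightarrow> c \<in> V \<Longrightarrow> a \<notin> V \<Longrightarrow> b \<notin> V \<Longrightarrow> a \<noteq> b \<Longrightarrow>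
         tcg (V \<union> {a,b}) (E \<union> {{a,b},{a,c},{b,c}}) (Suc k)"

lemma gpath_cons:
  assumes "gpath E p" "p \<noteq> []" "w \<notin> set p" "{w, p!0} \<in> E"
  shows "gpath E (w # p)"
  unfolding gpath_def
proof (intro conjI allI impI)
  show "distinct (w # p)" using assms unfolding gpath_def by simp
  fix i assume i: "Suc i < length (w # p)"
  show "{(w # p) ! i, (w # p) ! Suc i} \<in> E"
  proof (cases i)
    case 0 then show ?thesis using assms by simp
  next
    case (Suc m) then show ?thesis using assms i unfolding gpath_def by simp
  qed
qed

lemma end_nbr:
  assumes sg: "simple_graph V E"
    and nc: "\<forall>vs. distinct vs \<longrightarrow> 4 \<le> length vs \<longrightarrow> cyc_edges vs \<subseteq> E \<longrightarrow> False"
    and p: "gpath E p" "set p \<subseteq> V" "2 \<le> length p"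
    and mx: "\<forall>q. gpath E q \<and> set q \<subseteq> V \<longrightarrow> length q \<le> length p"
    and w: "{p!0, w} \<in> E"
  shows "w = p!1 \<or> (2 < length p \<and> w = p!2)"
proof -
  have wV: "w \<in> V" "p!0 \<noteq> w" using simple_pair[OF sg w] by auto
  have "w \<in> set p"
  proof (rule ccontr)
    assume "w \<notin> set p"
    moreover have "p \<noteq> []" using p(3) by auto
    moreover have "{w, p!0} \<in> E" using w by (simp add: insert_commute)
    ultimately have "gpath E (w # p)" using gpath_cons[OF p(1)] by blast
    moreover have "set (w # p) \<subseteq> V" using wV p by simp
    ultimately show False using mx by fastforce
  qed
  then obtain j where j: "j < length p" "w = p ! j" by (auto simp: in_set_conv_nth)
  have "j \<noteq> 0"
  proof
    assume "j = 0" then show False using j wV by simp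
  qed
  moreover have "\<not> 3 \<le> j"
  proof
    assume j3: "3 \<le> j"
    have "{p!j, p!0} \<in> E" using w j by (simp add: insert_commute)
    then have "distinct (take (Suc j) p) \<and> length (take (Suc j) p) = Suc j \<and> cyc_edges (take (Suc j) p) \<subseteq> E"
      using path_close_cycle[OF p(1), of j] j j3 by simp
    then show False using nc j3 by fastforce
  qed
  ultimately have "j = 1 \<or> j = 2" by auto
  then show ?thesis using j by auto
qed

lemma struct_tcg:
  assumes "simple_graph V E" "connected_graph V E"
    "\<forall>u v. {u,v} \<in> E \<longrightarrow> (\<exists>w. {u,w} \<in> E \<and> {v,w} \<in> E \<and> w \<noteq> u \<and> w \<noteq> v)"
    "\<forall>vs. distinct vs \<longrightarrow> 4 \<le> length vs \<longrightarrow> cyc_edges vs \<subseteq> E \<longrightarrow> False"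
  shows "\<exists>k. tcg V E k"
  using assms
proof (induction "card V" arbitrary: V E rule: less_induct)
  case less
  note sg = less.prems(1) and con = less.prems(2) and tri = less.prems(3) and nc = less.prems(4)
  have fV: "finite V" using sg unfolding simple_graph_def by simp
  have Vne: "V \<noteq> {}" using con unfolding connected_graph_def by simp
  show ?case
  proof (cases "card V = 1")
    case True
    then obtain v where v: "V = {v}" by (auto simp: card_Suc_eq)
    have "E = {}"
    proof (rule ccontr)
      assume "E \<noteq> {}"
      then obtain e where "e \<in> E" by blast
      then obtain s t where "s \<noteq> t" "s \<in> V" "t \<in> V" using simple_edge[OF sg] by blast
      then show False using v by auto
    qed
    then have "tcg V E 0" using v tcg.base by simp
    then show ?thesis by blast
  next
    case False
    have "card V \<noteq> 0" using Vne fV by simp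
    then have "\<not> card V \<le> Suc 0" using False by arith
    then have "\<not> (\<forall>x\<in>V. \<forall>y\<in>V. x = y)" using card_le_Suc0_iff_eq[OF fV] by blast
    then obtain u w where uw: "u \<in> V" "w \<in> V" "u \<noteq> w" by blast
    let ?R = "\<lambda>x y. x \<in> V \<and> y \<in> V \<and> {x, y} \<in> E"
    have "?R\<^sup>*\<^sup>* u w" using con uw unfolding connected_graph_def by blast
    then have "\<exists>y. ?R u y" using uw(3) by (induction rule: converse_rtranclp_induct) auto
    then obtain y where y: "{u, y} \<in> E" by blast
    define P where "P = (\<lambda>q. gpath E q \<and> set q \<subseteq> V)"
    have P0: "P [u, y]" unfolding P_def gpath_def using simple_pair[OF sg y] y by (auto simp: less_Suc_eq)
    have bnd: "\<forall>q. P q \<longrightarrow> length q < card V + 1"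
    proof (intro allI impI)
      fix q assume "P q"
      then have "set q \<subseteq> V" "distinct q" unfolding P_def gpath_def by auto
      then have "card (set q) \<le> card V" "card (set q) = length q"
        using card_mono[OF fV] distinct_card by auto
      then show "length q < card V + 1" by linarith
    qed
    obtain p where p: "P p" "\<forall>q. P q \<longrightarrow> length q \<le> length p"
      using Lattices_Big.ex_has_greatest_nat[of P "[u,y]" length, OF P0 bnd] by blast
    have "length [u,y] \<le> length p" using p(2) P0 by blast
    then have p2: "2 \<le> length p" by simp
    have gp: "gpath E p" "set p \<subseteq> V" using p(1) unfolding P_def by auto
    have mx: "\<forall>q. gpath E q \<and> set q \<subseteq> V \<longrightarrow> length q \<le> length p" using p unfolding P_def by auto
    have e01: "{p!0, p!1} \<in> E" using gp p2 unfolding gpath_def by auto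
    obtain x where x: "{p!0, x} \<in> E" "{p!1, x} \<in> E" "x \<noteq> p!0" "x \<noteq> p!1" using tri e01 by blast
    have x2: "2 < length p" "x = p!2" using end_nbr[OF sg nc gp p2 mx x(1)] x by auto
    then have "Suc (Suc (Suc 0)) \<le> length p" by simp
    then obtain a b c rest where abc: "p = a # b # c # rest" by (auto simp: Suc_le_length_iff)
    have dp: "distinct p" using gp unfolding gpath_def by simp
    have ab: "{a,b} \<in> E" and ac: "{a,c} \<in> E" and bc: "{b,c} \<in> E"
      using e01 x x2 abc by (auto simp: insert_commute)
    have Na: "\<And>z. {a, z} \<in> E \<Longrightarrow> z = b \<or> z = c"
      using end_nbr[OF sg nc gp p2 mx] abc by fastforce
    define p' where "p' = b # a # c # rest"
    have gp': "gpath E p'" unfolding gpath_def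
    proof (intro conjI allI impI)
      show "distinct p'" using dp abc unfolding p'_def by auto
      fix i assume i: "Suc i < length p'"
      show "{p' ! i, p' ! Suc i} \<in> E"
      proof (cases i)
        case 0 then show ?thesis using ab unfolding p'_def by (simp add: insert_commute)
      next
        case (Suc m)
        show ?thesis
        proof (cases m)
          case 0 then show ?thesis using ac Suc unfolding p'_def by simp
        next
          case (Suc m')
          have "Suc i < length p" using i abc unfolding p'_def by simp
          then have "{p ! i, p ! Suc i} \<in> E" using gp(1) unfolding gpath_def by blast
          moreover have "p'!i = p!i" "p'!Suc i = p!Suc i" using \<open>i = Suc m\<close> Suc abc unfolding p'_def by simp_all
          ultimately show ?thesis by simp
        qed
      qed
    qed
    have sp': "set p' \<subseteq> V" "2 \<le> length p'" using gp abc unfolding p'_def by auto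
    have mx': "\<forall>q. gpath E q \<and> set q \<subseteq> V \<longrightarrow> length q \<le> length p'" using mx abc unfolding p'_def by simp
    have Nb: "\<And>z. {b, z} \<in> E \<Longrightarrow> z = a \<or> z = c"
      using end_nbr[OF sg nc gp' sp' mx'] unfolding p'_def by fastforce
    have dabc: "a \<noteq> b" "a \<noteq> c" "b \<noteq> c" using dp abc by auto
    define V' where "V' = V - {a,b}"
    define E' where "E' = {e \<in> E. a \<notin> e \<and> b \<notin> e}"
    have aV: "a \<in> V" "b \<in> V" "c \<in> V" using gp abc by auto
    have VV: "V = V' \<union> {a,b}" unfolding V'_def using aV by auto
    have cV': "c \<in> V'" "a \<notin> V'" "b \<notin> V'" unfolding V'_def using aV dabc by auto
    have EE: "E = E' \<union> {{a,b},{a,c},{b,c}}"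
    proof
      show "E' \<union> {{a,b},{a,c},{b,c}} \<subseteq> E" using ab ac bc unfolding E'_def by auto
      show "E \<subseteq> E' \<union> {{a,b},{a,c},{b,c}}"
      proof
        fix e assume e: "e \<in> E"
        then obtain s t where st: "e = {s,t}" using simple_edge[OF sg] by blast
        show "e \<in> E' \<union> {{a,b},{a,c},{b,c}}"
        proof (cases "a \<in> e")
          case True
          then have "{a, if s = a then t else s} \<in> E" using e st by (auto simp: insert_commute)
          then have "(if s = a then t else s) = b \<or> (if s = a then t else s) = c" using Na by blast
          then show ?thesis using True st by (auto split: if_splits simp: insert_commute)
        next
          case False
          show ?thesis
          proof (cases "b \<in> e")
            case True
            then have "{b, if s = b then t else s} \<in> E" using e st by (auto simp: insert_commute)
            then have "(if s = b then t else s) = a \<or> (if s = b then t else s) = c" using Nb by blast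
            then show ?thesis using True st by (auto split: if_splits simp: insert_commute)
          next
            case False2: False
            then show ?thesis using False e unfolding E'_def by simp
          qed
        qed
      qed
    qed
    have sg': "simple_graph V' E'"
      unfolding simple_graph_def
    proof (intro conjI ballI)
      show "finite V'" using fV unfolding V'_def by simp
      fix e assume "e \<in> E'"
      then obtain s t where "s \<noteq> t" "s \<in> V" "t \<in> V" "e = {s,t}" "a \<notin> e" "b \<notin> e"
        using simple_edge[OF sg] unfolding E'_def by blast
      then show "\<exists>u v. u \<noteq> v \<and> u \<in> V' \<and> v \<in> V' \<and> e = {u, v}" unfolding V'_def by blast
    qed
    define g where "g = (\<lambda>z. if z = a \<or> z = b then c else z)"
    let ?R' = "\<lambda>x y. x \<in> V' \<and> y \<in> V' \<and> {x, y} \<in> E'"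
    have gmap: "?R'\<^sup>*\<^sup>* (g s) (g t)" if "?R\<^sup>*\<^sup>* s t" for s t
      using that
    proof (induction rule: rtranclp_induct)
      case base then show ?case by simp
    next
      case (step y z)
      have "?R'\<^sup>*\<^sup>* (g y) (g z)"
      proof (cases "y \<in> {a,b} \<or> z \<in> {a,b}")
        case True
        have "g y = g z"
        proof -
          have yz: "{y,z} \<in> E" using step by simp
          show ?thesis
          proof (cases "y = a")
            case True then show ?thesis using Na[of z] yz dabc unfolding g_def by auto
          next
            case ya: False
            show ?thesis
            proof (cases "y = b")
              case True then show ?thesis using Nb[of z] yz dabc unfolding g_def by auto
            next
              case yb: False
              then have "z = a \<or> z = b" using True ya by auto
              then show ?thesis using Na[of y] Nb[of y] yz dabc ya yb unfolding g_def by (auto simp: insert_commute)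
            qed
          qed
        qed
        then show ?thesis by simp
      next
        case False
        then have "?R' y z" using step unfolding V'_def E'_def by auto
        then show ?thesis using False unfolding g_def by auto
      qed
      with step.IH show ?case by (rule rtranclp_trans)
    qed
    have con': "connected_graph V' E'"
      unfolding connected_graph_def
    proof (intro conjI ballI)
      show "V' \<noteq> {}" using cV' by auto
      fix s t assume st: "s \<in> V'" "t \<in> V'"
      then have "?R\<^sup>*\<^sup>* s t" using con unfolding connected_graph_def V'_def by blast
      then have "?R'\<^sup>*\<^sup>* (g s) (g t)" by (rule gmap)
      moreover have "g s = s" "g t = t" using st cV' unfolding g_def by auto
      ultimately show "?R'\<^sup>*\<^sup>* s t" by simp
    qed
    have tri': "\<forall>u v. {u,v} \<in> E' \<longrightarrow> (\<exists>w. {u,w} \<in> E' \<and> {v,w} \<in> E' \<and> w \<noteq> u \<and> w \<noteq> v)"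
    proof (intro allI impI)
      fix s t assume st: "{s,t} \<in> E'"
      then have st': "{s,t} \<in> E" "s \<notin> {a,b}" "t \<notin> {a,b}" unfolding E'_def by auto
      have "s \<noteq> t" using simple_pair[OF sg st'(1)] by simp
      obtain w where w: "{s,w} \<in> E" "{t,w} \<in> E" "w \<noteq> s" "w \<noteq> t" using tri st'(1) by blast
      have "w \<noteq> a"
      proof
        assume "w = a"
        then have "{a,s} \<in> E" "{a,t} \<in> E" using w by (simp_all add: insert_commute)
        then have "s = b \<or> s = c" "t = b \<or> t = c" using Na by blast+
        then show False using st' \<open>s \<noteq> t\<close> by auto
      qed
      moreover have "w \<noteq> b"
      proof
        assume "w = b"
        then have "{b,s} \<in> E" "{b,t} \<in> E" using w by (simp_all add: insert_commute)
        then have "s = a \<or> s = c" "t = a \<or> t = c" using Nb by blast+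
        then show False using st' \<open>s \<noteq> t\<close> by auto
      qed
      ultimately show "\<exists>w. {s,w} \<in> E' \<and> {t,w} \<in> E' \<and> w \<noteq> s \<and> w \<noteq> t"
        using w st' unfolding E'_def by auto
    qed
    have nc': "\<forall>vs. distinct vs \<longrightarrow> 4 \<le> length vs \<longrightarrow> cyc_edges vs \<subseteq> E' \<longrightarrow> False"
    proof -
      have "E' \<subseteq> E" unfolding E'_def by blast
      then show ?thesis using nc by (meson subset_trans)
    qed
    have "card V' < card V" unfolding V'_def using fV aV by (intro psubset_card_mono) auto
    then obtain k where "tcg V' E' k" using less.hyps[OF _ sg' con' tri' nc'] by blast
    then have "tcg (V' \<union> {a,b}) (E' \<union> {{a,b},{a,c},{b,c}}) (Suc k)"
      using tcg.step[of V' E' k c a b] cV' dabc by blast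
    then show ?thesis unfolding VV[symmetric] EE[symmetric] by blast
  qed
qed

lemma tcg_basic: "tcg V E k \<Longrightarrow> finite V \<and> V \<noteq> {} \<and> simple_graph V E"
proof (induction rule: tcg.induct)
  case (base v) then show ?case unfolding simple_graph_def by simp
next
  case (step V E k c a b)
  have "simple_graph (V \<union> {a, b}) (E \<union> {{a, b}, {a, c}, {b, c}})"
    unfolding simple_graph_def
  proof (intro conjI ballI)
    show "finite (V \<union> {a, b})" using step by simp
    fix e assume e: "e \<in> E \<union> {{a, b}, {a, c}, {b, c}}"
    show "\<exists>u v. u \<noteq> v \<and> u \<in> V \<union> {a, b} \<and> v \<in> V \<union> {a, b} \<and> e = {u, v}"
    proof (cases "e \<in> E")
      case True
      have "simple_graph V E" using step by simp
      then obtain u v where "u \<noteq> v" "u \<in> V" "v \<in> V" "e = {u,v}" using simple_edge True by blast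
      then show ?thesis by blast
    next
      case False
      then have "e = {a,b} \<or> e = {a,c} \<or> e = {b,c}" using e by blast
      moreover have "a \<noteq> c" "b \<noteq> c" using step by auto
      ultimately show ?thesis using step.hyps by (elim disjE) blast+
    qed
  qed
  then show ?case using step by simp
qed

lemma tcg_sub: "tcg V E k \<Longrightarrow> e \<in> E \<Longrightarrow> e \<subseteq> V"
  using tcg_basic simple_sub by metis

definition tri_set :: "'a set \<Rightarrow> 'a set set \<Rightarrow> 'a set set" where
  "tri_set V E = {T. T \<subseteq> V \<and> card T = 3 \<and> (\<forall>x\<in>T. \<forall>y\<in>T. x \<noteq> y \<longrightarrow> {x, y} \<in> E)}"

lemma tcg_tri: "tcg V E k \<Longrightarrow> card (tri_set V E) = k"
proof (induction rule: tcg.induct)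
  case (base v)
  have "tri_set {v} {} = {}"
  proof -
    have "\<And>T. T \<subseteq> {v} \<Longrightarrow> card T \<le> 1" using card_mono[of "{v}"] by simp
    then show ?thesis unfolding tri_set_def by fastforce
  qed
  then show ?case by simp
next
  case (step V E k c a b)
  have EV: "\<And>e. e \<in> E \<Longrightarrow> e \<subseteq> V" using step.hyps(1) tcg_sub by blast
  have fV: "finite V" using tcg_basic[OF step.hyps(1)] by simp
  let ?V = "V \<union> {a, b}" and ?E = "E \<union> {{a, b}, {a, c}, {b, c}}"
  have ac: "a \<noteq> c" "b \<noteq> c" using step by auto
  have Na: "\<And>y. {a, y} \<in> ?E \<Longrightarrow> y = b \<or> y = c"
  proof -
    fix y assume "{a, y} \<in> ?E"
    moreover have "{a, y} \<notin> E" using EV step.hyps(3) by blast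
    ultimately show "y = b \<or> y = c" by (auto simp: doubleton_eq_iff)
  qed
  have Nb: "\<And>y. {b, y} \<in> ?E \<Longrightarrow> y = a \<or> y = c"
  proof -
    fix y assume "{b, y} \<in> ?E"
    moreover have "{b, y} \<notin> E" using EV step.hyps(4) by blast
    ultimately show "y = a \<or> y = c" by (auto simp: doubleton_eq_iff)
  qed
  have eq: "tri_set ?V ?E = insert {a,b,c} (tri_set V E)"
  proof
    show "insert {a,b,c} (tri_set V E) \<subseteq> tri_set ?V ?E"
    proof
      fix T assume "T \<in> insert {a,b,c} (tri_set V E)"
      then show "T \<in> tri_set ?V ?E"
      proof
        assume T: "T = {a,b,c}"
        have "card T = 3" unfolding T using step ac by simp
        moreover have "T \<subseteq> ?V" unfolding T using step by auto
        moreover have "\<forall>x\<in>T. \<forall>y\<in>T. x \<noteq> y \<longrightarrow> {x, y} \<in> ?E" unfolding T by (auto simp: insert_commute)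
        ultimately show ?thesis unfolding tri_set_def by blast
      next
        assume "T \<in> tri_set V E"
        then show ?thesis unfolding tri_set_def by auto
      qed
    qed
    show "tri_set ?V ?E \<subseteq> insert {a,b,c} (tri_set V E)"
    proof
      fix T assume T: "T \<in> tri_set ?V ?E"
      then have T3: "card T = 3" and TV: "T \<subseteq> ?V" and Te: "\<And>x y. x \<in> T \<Longrightarrow> y \<in> T \<Longrightarrow> x \<noteq> y \<Longrightarrow> {x, y} \<in> ?E"
        unfolding tri_set_def by auto
      have fT: "finite T" using T3 by (metis card.infinite zero_neq_numeral)
      show "T \<in> insert {a,b,c} (tri_set V E)"
      proof (cases "a \<in> T \<or> b \<in> T")
        case True
        have "T \<subseteq> {a,b,c}"
        proof
          fix y assume y: "y \<in> T"
          show "y \<in> {a,b,c}"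
          proof (cases "a \<in> T")
            case True
            then show ?thesis using Na[of y] Te[of a y] y by auto
          next
            case False
            then have "b \<in> T" using \<open>a \<in> T \<or> b \<in> T\<close> by simp
            then show ?thesis using Nb[of y] Te[of b y] y by auto
          qed
        qed
        moreover have "card {a,b,c} = 3" using step ac by simp
        ultimately have "T = {a,b,c}" using T3 by (simp add: card_subset_eq)
        then show ?thesis by simp
      next
        case False
        then have "T \<subseteq> V" using TV by auto
        moreover have "\<forall>x\<in>T. \<forall>y\<in>T. x \<noteq> y \<longrightarrow> {x, y} \<in> E"
        proof (intro ballI impI)
          fix x y assume "x \<in> T" "y \<in> T" "x \<noteq> y"
          then have "{x,y} \<in> ?E" "x \<noteq> a" "x \<noteq> b" "y \<noteq> a" "y \<noteq> b" using Te False by auto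
          then show "{x, y} \<in> E" by (auto simp: doubleton_eq_iff)
        qed
        ultimately show ?thesis using T3 unfolding tri_set_def by auto
      qed
    qed
  qed
  have "{a,b,c} \<notin> tri_set V E" unfolding tri_set_def using step.hyps(3) by auto
  moreover have "finite (tri_set V E)" unfolding tri_set_def using fV
    by (rule_tac finite_subset[of _ "Pow V"]) auto
  ultimately show ?case using eq step.IH by simp
qed

lemma tcg_num_tri: "tcg V E k \<Longrightarrow> num_triangles V E = k"
  unfolding num_triangles_def using tcg_tri[unfolded tri_set_def] by blast

lemma join_edge_sub: "(\<And>e. e \<in> E \<Longrightarrow> e \<subseteq> V) \<Longrightarrow> e \<in> join_K1_E V E \<Longrightarrow> e \<subseteq> join_K1_V V"
  unfolding join_K1_E_def join_K1_V_def by auto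

lemma join_fin: "finite V \<Longrightarrow> (\<And>e. e \<in> E \<Longrightarrow> e \<subseteq> V) \<Longrightarrow> finite (join_K1_E V E)"
proof -
  assume a: "finite V" "\<And>e. e \<in> E \<Longrightarrow> e \<subseteq> V"
  have 1: "join_K1_E V E \<subseteq> Pow (join_K1_V V)"
  proof
    fix e assume "e \<in> join_K1_E V E"
    then show "e \<in> Pow (join_K1_V V)" using join_edge_sub[of E V e] a by simp
  qed
  have 2: "finite (join_K1_V V)" unfolding join_K1_V_def using a by simp
  show ?thesis using finite_subset[OF 1] 2 by simp
qed

lemma join_Some: "e \<in> E \<Longrightarrow> Some ` e \<in> join_K1_E V E"
  unfolding join_K1_E_def by blast

lemma join_apex: "v \<in> V \<Longrightarrow> {None, Some v} \<in> join_K1_E V E"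
  unfolding join_K1_E_def by blast

lemma join_mono: "E \<subseteq> E' \<Longrightarrow> V \<subseteq> V' \<Longrightarrow> join_K1_E V E \<subseteq> join_K1_E V' E'"
  unfolding join_K1_E_def by blast

lemma cyc_at:
  assumes "is_cycle G C" "x \<in> e" "e \<in> C"
  shows "\<exists>e1\<in>C. \<exists>e2\<in>C. e1 \<noteq> e2 \<and> x \<in> e1 \<and> x \<in> e2"
proof -
  obtain vs where vs: "3 \<le> length vs" "distinct vs" "C = cyc_edges vs" using assms(1) unfolding is_cycle_cyc by blast
  show ?thesis using cycle_two_edges[OF vs(1,2) assms(2)] assms(3) vs(3) by blast
qed

lemma cyc_ne: "is_cycle G C \<Longrightarrow> C \<noteq> {}"
proof -
  assume "is_cycle G C"
  then obtain vs where vs: "3 \<le> length vs" "C = cyc_edges vs" unfolding is_cycle_cyc by blast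
  then have "{vs ! 0, vs ! ((0 + 1) mod length vs)} \<in> C" unfolding cyc_edges_def by force
  then show ?thesis by blast
qed

lemma is_cycle_sub: "is_cycle G C \<Longrightarrow> C \<subseteq> G' \<Longrightarrow> is_cycle G' C"
  unfolding is_cycle_cyc by blast

lemma is_cycle_subE: "is_cycle G C \<Longrightarrow> C \<subseteq> G"
  unfolding is_cycle_cyc by blast

lemma two_set_other: "e = {u, v} \<Longrightarrow> u \<noteq> v \<Longrightarrow> z \<in> e \<Longrightarrow> \<exists>y. y \<noteq> z \<and> e = {z, y}"
  by auto

lemma mindeg_cycle:
  assumes fD: "finite D" and two: "\<forall>e\<in>D. \<exists>u v. u \<noteq> v \<and> e = {u, v}" and ne: "D \<noteq> {}"
    and md: "\<forall>z\<in>\<Union>D. \<exists>e1\<in>D. \<exists>e2\<in>D. e1 \<noteq> e2 \<and> z \<in> e1 \<and> z \<in> e2"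
  shows "\<exists>C. is_cycle D C"
proof -
  let ?W = "\<Union>D"
  have fW: "finite ?W" using fD two by fastforce
  obtain e0 where e0: "e0 \<in> D" using ne by blast
  then obtain u v where uv: "u \<noteq> v" "e0 = {u,v}" using two by blast
  define P where "P = (\<lambda>q. gpath D q \<and> set q \<subseteq> ?W)"
  have P0: "P [u, v]" unfolding P_def gpath_def using uv e0 by (auto simp: less_Suc_eq)
  have bnd: "\<forall>q. P q \<longrightarrow> length q < card ?W + 1"
  proof (intro allI impI)
    fix q assume "P q"
    then have "set q \<subseteq> ?W" "distinct q" unfolding P_def gpath_def by auto
    then have "card (set q) \<le> card ?W" "card (set q) = length q"
      using card_mono[OF fW] distinct_card by auto
    then show "length q < card ?W + 1" by linarith
  qed
  obtain p where p: "P p" "\<forall>q. P q \<longrightarrow> length q \<le> length p"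
    using Lattices_Big.ex_has_greatest_nat[of P "[u,v]" length, OF P0 bnd] by blast
  have "length [u,v] \<le> length p" using p(2) P0 by blast
  then have p2: "2 \<le> length p" by simp
  have gp: "gpath D p" "set p \<subseteq> ?W" using p(1) unfolding P_def by auto
  have "p!0 \<in> set p" using p2 by (intro nth_mem) linarith
  then have z: "p!0 \<in> ?W" using gp by blast
  obtain f1 f2 where f: "f1 \<in> D" "f2 \<in> D" "f1 \<noteq> f2" "p!0 \<in> f1" "p!0 \<in> f2" using md z by blast
  obtain y1 where y1: "y1 \<noteq> p!0" "f1 = {p!0, y1}" using two f(1) f(4) two_set_other by metis
  obtain y2 where y2: "y2 \<noteq> p!0" "f2 = {p!0, y2}" using two f(2) f(5) two_set_other by metis
  have "y1 \<noteq> y2" using f(3) y1 y2 by auto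
  then obtain y where y: "y \<noteq> p!1" "y \<noteq> p!0" "{p!0, y} \<in> D" using y1 y2 f by metis
  have "y \<in> set p"
  proof (rule ccontr)
    assume "y \<notin> set p"
    moreover have "p \<noteq> []" using p2 by auto
    moreover have "{y, p!0} \<in> D" using y by (simp add: insert_commute)
    ultimately have "gpath D (y # p)" using gpath_cons[OF gp(1)] by blast
    moreover have "set (y # p) \<subseteq> ?W" using gp y by auto
    ultimately show False using p(2) unfolding P_def by fastforce
  qed
  then obtain j where j: "j < length p" "y = p ! j" by (auto simp: in_set_conv_nth)
  have "j \<noteq> 0" "j \<noteq> 1" using j(2) y(1,2) by (metis One_nat_def)+
  then have j2: "2 \<le> j" by simp
  have "{p!j, p!0} \<in> D" using y j by (simp add: insert_commute)
  then have "distinct (take (Suc j) p) \<and> length (take (Suc j) p) = Suc j \<and> cyc_edges (take (Suc j) p) \<subseteq> D"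
    using path_close_cycle[OF gp(1) j2 j(1)] by simp
  moreover have "3 \<le> length (take (Suc j) p)" using j2 j(1) by simp
  ultimately have "is_cycle D (cyc_edges (take (Suc j) p))" unfolding is_cycle_cyc by blast
  then show ?thesis by blast
qed

lemma join_noSome:
  assumes "tcg V E k" "a \<notin> V" "e \<in> join_K1_E V E" shows "Some a \<notin> e"
proof -
  have "e \<subseteq> join_K1_V V" using join_edge_sub[of E V e] tcg_sub[OF assms(1)] assms(3) by blast
  then show ?thesis using assms(2) unfolding join_K1_V_def by auto
qed

lemma tcg_lower: "tcg V E k \<Longrightarrow> \<exists>\<C>. finite \<C> \<and> \<C> \<subseteq> {C. is_cycle (join_K1_E V E) C} \<and> pairwise disjnt \<C> \<and> card \<C> = k"
proof (induction rule: tcg.induct)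
  case (base v)
  show ?case by (rule exI[of _ "{}"]) simp
next
  case (step V E k c a b)
  obtain \<C> where C: "finite \<C>" "\<C> \<subseteq> {C. is_cycle (join_K1_E V E) C}" "pairwise disjnt \<C>" "card \<C> = k"
    using step.IH by blast
  let ?V = "V \<union> {a, b}" and ?E = "E \<union> {{a, b}, {a, c}, {b, c}}"
  let ?J = "join_K1_E V E" and ?J' = "join_K1_E ?V ?E"
  define T where "T = cyc_edges [Some a, Some b, Some c]"
  have T3: "T = {{Some a, Some b}, {Some b, Some c}, {Some c, Some a}}" unfolding T_def by (rule cyc_edges_3)
  have ac: "a \<noteq> c" "b \<noteq> c" using step.hyps by auto
  have JJ: "?J \<subseteq> ?J'" by (rule join_mono) auto
  have "{Some a, Some b} \<in> ?J'" using join_Some[of "{a,b}" ?E ?V] by simp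
  moreover have "{Some b, Some c} \<in> ?J'" using join_Some[of "{b,c}" ?E ?V] by simp
  moreover have "{Some c, Some a} \<in> ?J'" using join_Some[of "{a,c}" ?E ?V] by (simp add: insert_commute)
  ultimately have TJ: "T \<subseteq> ?J'" unfolding T3 by blast
  have cT: "is_cycle ?J' T" unfolding is_cycle_cyc
    using TJ step.hyps ac unfolding T_def by (intro exI[of _ "[Some a, Some b, Some c]"]) auto
  have disj: "disjnt T C" if "C \<in> \<C>" for C
  proof -
    have CJ: "C \<subseteq> ?J" using that C(2) is_cycle_subE by blast
    have "\<And>e. e \<in> C \<Longrightarrow> Some a \<notin> e \<and> Some b \<notin> e"
      using join_noSome[OF step.hyps(1)] step.hyps(3,4) CJ by blast
    then show ?thesis unfolding disjnt_def T3 by auto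
  qed
  have TnC: "T \<notin> \<C>"
  proof
    assume "T \<in> \<C>"
    then have "disjnt T T" by (rule disj)
    then show False unfolding T3 disjnt_def by simp
  qed
  show ?case
  proof (intro exI conjI)
    show "finite (insert T \<C>)" using C by simp
    show "insert T \<C> \<subseteq> {C. is_cycle ?J' C}" using C(2) cT is_cycle_mono[OF _ JJ] by blast
    show "pairwise disjnt (insert T \<C>)"
      using C(3) disj by (simp add: pairwise_insert disjnt_sym)
    show "card (insert T \<C>) = Suc k" using C TnC by simp
  qed
qed

lemma join_two: "simple_graph V E \<Longrightarrow> e \<in> join_K1_E V E \<Longrightarrow> \<exists>u v. u \<noteq> v \<and> e = {u, v}"
proof -
  assume sg: "simple_graph V E" and e: "e \<in> join_K1_E V E"
  show ?thesis
  proof (cases "e \<in> image Some ` E")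
    case True
    then obtain e' where e': "e' \<in> E" "e = Some ` e'" by blast
    then obtain u v where "u \<noteq> v" "e' = {u,v}" using simple_edge[OF sg] by blast
    then show ?thesis using e' by (intro exI[of _ "Some u"] exI[of _ "Some v"]) auto
  next
    case False
    then show ?thesis using e unfolding join_K1_E_def by blast
  qed
qed

lemma pigeon3: "e1 \<in> {x1,x2,x3} \<Longrightarrow> e2 \<in> {x1,x2,x3} \<Longrightarrow> e3 \<in> {x1,x2,x3} \<Longrightarrow> e4 \<in> {x1,x2,x3} \<Longrightarrow>
  e1 \<noteq> e2 \<Longrightarrow> e1 \<noteq> e3 \<Longrightarrow> e1 \<noteq> e4 \<Longrightarrow> e2 \<noteq> e3 \<Longrightarrow> e2 \<noteq> e4 \<Longrightarrow> e3 \<noteq> e4 \<Longrightarrow> False"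
  by blast

lemma tcg_upper: "tcg V E k \<Longrightarrow> \<C> \<subseteq> {C. is_cycle (join_K1_E V E) C} \<Longrightarrow> pairwise disjnt \<C> \<Longrightarrow> card \<C> \<le> k"
proof (induction arbitrary: \<C> rule: tcg.induct)
  case (base v)
  have J: "\<And>e. e \<in> join_K1_E {v} {} \<Longrightarrow> e = {None, Some v}" unfolding join_K1_E_def by blast
  have "\<C> = {}"
  proof (rule ccontr)
    assume "\<C> \<noteq> {}"
    then obtain C where C: "C \<in> \<C>" by blast
    then have cC: "is_cycle (join_K1_E {v} {}) C" using base by blast
    then obtain e where e: "e \<in> C" using cyc_ne by blast
    then have "e = {None, Some v}" using J is_cycle_subE[OF cC] by blast
    then obtain e1 e2 where "e1 \<in> C" "e2 \<in> C" "e1 \<noteq> e2" using cyc_at[OF cC _ e, of None] by blast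
    then show False using J is_cycle_subE[OF cC] by blast
  qed
  then show ?case by simp
next
  case (step V E k c a b)
  let ?V = "V \<union> {a, b}" and ?E = "E \<union> {{a, b}, {a, c}, {b, c}}"
  let ?J = "join_K1_E V E" and ?J' = "join_K1_E ?V ?E"
  let ?N = "None :: 'a option" and ?a = "Some a" and ?b = "Some b" and ?c = "Some c"
  have tc': "tcg ?V ?E (Suc k)" using tcg.step[OF step.hyps] .
  have sg': "simple_graph ?V ?E" and fV': "finite ?V" using tcg_basic[OF tc'] by auto
  have fJ': "finite ?J'" using join_fin[OF fV'] tcg_sub[OF tc'] by blast
  have ac: "a \<noteq> c" "b \<noteq> c" "a \<noteq> b" using step.hyps by auto
  have noa: "\<And>e. e \<in> ?J \<Longrightarrow> ?a \<notin> e" using join_noSome[OF step.hyps(1) step.hyps(3)] by blast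
  have nob: "\<And>e. e \<in> ?J \<Longrightarrow> ?b \<notin> e" using join_noSome[OF step.hyps(1) step.hyps(4)] by blast
  define eab where "eab = {?a,?b}"
  define eac where "eac = {?a,?c}"
  define ebc where "ebc = {?b,?c}"
  define eNa where "eNa = {?N,?a}"
  define eNb where "eNb = {?N,?b}"
  have dst: "?a \<noteq> ?b" "?a \<noteq> ?c" "?b \<noteq> ?c" "?N \<noteq> ?a" "?N \<noteq> ?b" "?N \<noteq> ?c"
    using ac by auto
  have memb: "\<And>x. x \<in> eab \<longleftrightarrow> x = ?a \<or> x = ?b" "\<And>x. x \<in> eac \<longleftrightarrow> x = ?a \<or> x = ?c"
    "\<And>x. x \<in> ebc \<longleftrightarrow> x = ?b \<or> x = ?c" "\<And>x. x \<in> eNa \<longleftrightarrow> x = ?N \<or> x = ?a"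
    "\<And>x. x \<in> eNb \<longleftrightarrow> x = ?N \<or> x = ?b"
    unfolding eab_def eac_def ebc_def eNa_def eNb_def by auto
  have newE: "e \<in> ?J \<or> e \<in> {eab, eac, ebc, eNa, eNb}" if "e \<in> ?J'" for e
  proof (cases "e \<in> image Some ` ?E")
    case True
    then obtain e' where e': "e' \<in> ?E" "e = Some ` e'" by blast
    show ?thesis
    proof (cases "e' \<in> E")
      case True then show ?thesis using e' join_Some by (intro disjI1) simp
    next
      case False
      then have "e' = {a,b} \<or> e' = {a,c} \<or> e' = {b,c}" using e' by simp
      then show ?thesis using e'(2) unfolding eab_def eac_def ebc_def by (intro disjI2) auto
    qed
  next
    case False
    then have "e \<in> {{None, Some v} | v. v \<in> ?V}" using that unfolding join_K1_E_def by simp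
    then obtain v where v: "v \<in> ?V" "e = {?N, Some v}" by blast
    show ?thesis
    proof (cases "v \<in> V")
      case True then show ?thesis using v join_apex by (intro disjI1) simp
    next
      case False then have "v = a \<or> v = b" using v by blast
      then show ?thesis using v unfolding eNa_def eNb_def by (intro disjI2) auto
    qed
  qed
  have oldE: "e \<in> ?J" if "e \<in> ?J'" "?a \<notin> e" "?b \<notin> e" for e
    using newE[OF that(1)] that(2,3) memb by blast
  have atA: "e \<in> {eab,eac,eNa}" if "e \<in> ?J'" "?a \<in> e" for e
  proof -
    have "e \<notin> ?J" using noa that(2) by blast
    then have "e \<in> {eab,eac,ebc,eNa,eNb}" using newE[OF that(1)] by blast
    moreover have "?a \<notin> ebc" "?a \<notin> eNb" using memb dst by auto
    ultimately show ?thesis using that(2) by blast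
  qed
  have atB: "e \<in> {eab,ebc,eNb}" if "e \<in> ?J'" "?b \<in> e" for e
  proof -
    have "e \<notin> ?J" using nob that(2) by blast
    then have "e \<in> {eab,eac,ebc,eNa,eNb}" using newE[OF that(1)] by blast
    moreover have "?b \<notin> eac" "?b \<notin> eNa" using memb dst by auto
    ultimately show ?thesis using that(2) by blast
  qed
  have cyc: "\<And>C. C \<in> \<C> \<Longrightarrow> is_cycle ?J' C" using step.prems(1) by blast
  have CJ': "\<And>C. C \<in> \<C> \<Longrightarrow> C \<subseteq> ?J'" using cyc is_cycle_subE by blast
  have fin: "finite \<C>" using CJ' fJ' by (meson PowI finite_Pow_iff finite_subset subsetI)
  have dis: "\<And>C C'. C \<in> \<C> \<Longrightarrow> C' \<in> \<C> \<Longrightarrow> C \<noteq> C' \<Longrightarrow> C \<inter> C' = {}"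
    using step.prems(2) unfolding pairwise_def disjnt_def by blast
  define A where "A = {C \<in> \<C>. ?a \<in> \<Union>C}"
  define B where "B = {C \<in> \<C>. ?b \<in> \<Union>C}"
  define C1s where "C1s = {C \<in> \<C>. C \<subseteq> ?J}"
  have cov: "\<C> \<subseteq> C1s \<union> (A \<union> B)"
  proof
    fix C assume C: "C \<in> \<C>"
    show "C \<in> C1s \<union> (A \<union> B)"
    proof (cases "C \<subseteq> ?J")
      case True then show ?thesis using C unfolding C1s_def by blast
    next
      case False
      then obtain e where e: "e \<in> C" "e \<notin> ?J" by blast
      then have "?a \<in> e \<or> ?b \<in> e" using oldE CJ'[OF C] by blast
      then show ?thesis using C e unfolding A_def B_def by blast
    qed
  qed
  have Auniq: "C = C'" if "C \<in> A" "C' \<in> A" for C C'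
  proof (rule ccontr)
    assume ne: "C \<noteq> C'"
    have C: "C \<in> \<C>" "?a \<in> \<Union>C" and C': "C' \<in> \<C>" "?a \<in> \<Union>C'" using that unfolding A_def by auto
    obtain e1 e2 where e: "e1 \<in> C" "e2 \<in> C" "e1 \<noteq> e2" "?a \<in> e1" "?a \<in> e2"
      using C(2) cyc_at[OF cyc[OF C(1)]] by blast
    obtain e3 e4 where e': "e3 \<in> C'" "e4 \<in> C'" "e3 \<noteq> e4" "?a \<in> e3" "?a \<in> e4"
      using C'(2) cyc_at[OF cyc[OF C'(1)]] by blast
    have "C \<inter> C' = {}" using dis C(1) C'(1) ne by blast
    then have "e1 \<noteq> e3" "e1 \<noteq> e4" "e2 \<noteq> e3" "e2 \<noteq> e4" using e e' by blast+
    moreover have "e1 \<in> {eab,eac,eNa}" "e2 \<in> {eab,eac,eNa}"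
      "e3 \<in> {eab,eac,eNa}" "e4 \<in> {eab,eac,eNa}"
      using atA CJ' C(1) C'(1) e e' by blast+
    ultimately show False using pigeon3 e(3) e'(3) by metis
  qed
  have Buniq: "C = C'" if "C \<in> B" "C' \<in> B" for C C'
  proof (rule ccontr)
    assume ne: "C \<noteq> C'"
    have C: "C \<in> \<C>" "?b \<in> \<Union>C" and C': "C' \<in> \<C>" "?b \<in> \<Union>C'" using that unfolding B_def by auto
    obtain e1 e2 where e: "e1 \<in> C" "e2 \<in> C" "e1 \<noteq> e2" "?b \<in> e1" "?b \<in> e2"
      using C(2) cyc_at[OF cyc[OF C(1)]] by blast
    obtain e3 e4 where e': "e3 \<in> C'" "e4 \<in> C'" "e3 \<noteq> e4" "?b \<in> e3" "?b \<in> e4"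
      using C'(2) cyc_at[OF cyc[OF C'(1)]] by blast
    have "C \<inter> C' = {}" using dis C(1) C'(1) ne by blast
    then have "e1 \<noteq> e3" "e1 \<noteq> e4" "e2 \<noteq> e3" "e2 \<noteq> e4" using e e' by blast+
    moreover have "e1 \<in> {eab,ebc,eNb}" "e2 \<in> {eab,ebc,eNb}"
      "e3 \<in> {eab,ebc,eNb}" "e4 \<in> {eab,ebc,eNb}"
      using atB CJ' C(1) C'(1) e e' by blast+
    ultimately show False using pigeon3 e(3) e'(3) by metis
  qed
  have C1cyc: "C1s \<subseteq> {C. is_cycle ?J C}"
  proof
    fix C assume "C \<in> C1s"
    then have "C \<in> \<C>" "C \<subseteq> ?J" unfolding C1s_def by auto
    then show "C \<in> {C. is_cycle ?J C}" using cyc is_cycle_sub by blast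
  qed
  have C1dis: "pairwise disjnt C1s" using step.prems(2) unfolding C1s_def by (rule pairwise_subset) blast
  have C1k: "card C1s \<le> k" using step.IH[OF C1cyc C1dis] .
  have fC1: "finite C1s" "finite (A \<union> B)" using fin unfolding C1s_def A_def B_def by auto
  have "card \<C> \<le> card (C1s \<union> (A \<union> B))" using card_mono[OF _ cov] fC1 by simp
  also have "\<dots> \<le> card C1s + card (A \<union> B)" by (rule card_Un_le)
  finally have cardC: "card \<C> \<le> card C1s + card (A \<union> B)" .
  show ?case
  proof (cases "card (A \<union> B) \<le> 1")
    case True
    then show ?thesis using cardC C1k by linarith
  next
    case False
    then have "\<not> (\<forall>x\<in>A \<union> B. \<forall>y\<in>A \<union> B. x = y)" using card_le_Suc0_iff_eq[OF fC1(2)] by simp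
    then obtain X1 X2 where X: "X1 \<in> A \<union> B" "X2 \<in> A \<union> B" "X1 \<noteq> X2" by blast
    obtain C1 C2 where CC: "C1 \<in> A" "C2 \<in> B" "C1 \<noteq> C2"
    proof (cases "X1 \<in> A")
      case True
      then have "X2 \<notin> A" using Auniq X(3) by metis
      then have "X2 \<in> B" using X(2) by simp
      then show ?thesis using that True X(3) by simp
    next
      case False
      then have "X1 \<in> B" using X(1) by simp
      then have "X2 \<notin> B" using Buniq X(3) by metis
      then have "X2 \<in> A" using X(2) by simp
      then show ?thesis using that \<open>X1 \<in> B\<close> X(3) by metis
    qed
    have AB: "A \<union> B \<subseteq> {C1, C2}"
    proof
      fix C assume "C \<in> A \<union> B"
      then have "C = C1 \<or> C = C2" using Auniq[OF _ CC(1)] Buniq[OF _ CC(2)] by blast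
      then show "C \<in> {C1, C2}" by simp
    qed
    have "card {C1, C2} = 2" using CC(3) by simp
    then have cardAB: "card (A \<union> B) \<le> 2" using card_mono[OF _ AB] by simp
    have C1: "C1 \<in> \<C>" "?a \<in> \<Union>C1" using CC unfolding A_def by auto
    have C2: "C2 \<in> \<C>" "?b \<in> \<Union>C2" using CC unfolding B_def by auto
    have nb1: "?b \<notin> \<Union>C1"
    proof
      assume "?b \<in> \<Union>C1"
      then have "C1 \<in> B" using C1 unfolding B_def by blast
      then show False using Buniq CC by blast
    qed
    have na2: "?a \<notin> \<Union>C2"
    proof
      assume "?a \<in> \<Union>C2"
      then have "C2 \<in> A" using C2 unfolding A_def by blast
      then show False using Auniq CC by blast
    qed
    have C12: "C1 \<inter> C2 = {}" using dis C1(1) C2(1) CC(3) by blast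
    have R1: "eac \<in> C1" "eNa \<in> C1"
    proof -
      obtain e1 e2 where e: "e1 \<in> C1" "e2 \<in> C1" "e1 \<noteq> e2" "?a \<in> e1" "?a \<in> e2"
        using C1(2) cyc_at[OF cyc[OF C1(1)]] by blast
      have "e1 \<in> {eab,eac,eNa}" "e2 \<in> {eab,eac,eNa}"
        using atA CJ' C1(1) e by blast+
      moreover have "e1 \<noteq> eab" "e2 \<noteq> eab" using nb1 e memb by blast+
      ultimately have "e1 \<in> {eac,eNa}" "e2 \<in> {eac,eNa}" by blast+
      then show "eac \<in> C1" "eNa \<in> C1" using e(1-3) by blast+
    qed
    have R2: "ebc \<in> C2" "eNb \<in> C2"
    proof -
      obtain e1 e2 where e: "e1 \<in> C2" "e2 \<in> C2" "e1 \<noteq> e2" "?b \<in> e1" "?b \<in> e2"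
        using C2(2) cyc_at[OF cyc[OF C2(1)]] by blast
      have "e1 \<in> {eab,ebc,eNb}" "e2 \<in> {eab,ebc,eNb}"
        using atB CJ' C2(1) e by blast+
      moreover have "e1 \<noteq> eab" "e2 \<noteq> eab" using na2 e memb by blast+
      ultimately have "e1 \<in> {ebc,eNb}" "e2 \<in> {ebc,eNb}" by blast+
      then show "ebc \<in> C2" "eNb \<in> C2" using e(1-3) by blast+
    qed
    define D where "D = (C1 - {eac,eNa}) \<union> (C2 - {ebc,eNb})"
    have DJ: "D \<subseteq> ?J"
    proof
      fix e assume e: "e \<in> D"
      show "e \<in> ?J"
      proof (cases "e \<in> C1")
        case True
        then have eJ: "e \<in> ?J'" using CJ' C1(1) by blast
        have nb: "?b \<notin> e" using nb1 True by blast
        have "?a \<notin> e"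
        proof
          assume "?a \<in> e"
          then have "e \<in> {eab,eac,eNa}" using atA eJ by blast
          moreover have "e \<noteq> eab" using nb memb by blast
          ultimately show False using e True C12 unfolding D_def by blast
        qed
        then show ?thesis using oldE eJ nb by blast
      next
        case False
        then have T: "e \<in> C2" using e unfolding D_def by blast
        then have eJ: "e \<in> ?J'" using CJ' C2(1) by blast
        have na: "?a \<notin> e" using na2 T by blast
        have "?b \<notin> e"
        proof
          assume "?b \<in> e"
          then have "e \<in> {eab,ebc,eNb}" using atB eJ by blast
          moreover have "e \<noteq> eab" using na memb by blast
          ultimately show False using e T False C12 unfolding D_def by blast
        qed
        then show ?thesis using oldE eJ na by blast
      qed
    qed
    have H1: "\<exists>f\<in>C1 - {eac,eNa}. z \<in> f" if zz: "z \<in> \<Union>C1" "z \<noteq> ?a" for z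
    proof -
      obtain e0 where "e0 \<in> C1" "z \<in> e0" using zz by blast
      then obtain e1 e2 where e: "e1 \<in> C1" "e2 \<in> C1" "e1 \<noteq> e2" "z \<in> e1" "z \<in> e2"
        using cyc_at[OF cyc[OF C1(1)]] by blast
      show ?thesis
      proof (cases "e1 \<in> {eac,eNa}")
        case True
        then have "e2 \<notin> {eac,eNa}" using e zz(2) dst by (auto simp: memb)
        then show ?thesis using e by blast
      next
        case False then show ?thesis using e by blast
      qed
    qed
    have H2: "\<exists>f\<in>C2 - {ebc,eNb}. z \<in> f" if zz: "z \<in> \<Union>C2" "z \<noteq> ?b" for z
    proof -
      obtain e0 where "e0 \<in> C2" "z \<in> e0" using zz by blast
      then obtain e1 e2 where e: "e1 \<in> C2" "e2 \<in> C2" "e1 \<noteq> e2" "z \<in> e1" "z \<in> e2"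
        using cyc_at[OF cyc[OF C2(1)]] by blast
      show ?thesis
      proof (cases "e1 \<in> {ebc,eNb}")
        case True
        then have "e2 \<notin> {ebc,eNb}" using e zz(2) dst by (auto simp: memb)
        then show ?thesis using e by blast
      next
        case False then show ?thesis using e by blast
      qed
    qed
    have H1': "\<exists>f1\<in>D. \<exists>f2\<in>D. f1 \<noteq> f2 \<and> z \<in> f1 \<and> z \<in> f2" if zz: "z \<in> \<Union>C1" "z \<noteq> ?a" "z \<noteq> ?c" "z \<noteq> ?N" for z
    proof -
      obtain e0 where "e0 \<in> C1" "z \<in> e0" using zz by blast
      then obtain e1 e2 where e: "e1 \<in> C1" "e2 \<in> C1" "e1 \<noteq> e2" "z \<in> e1" "z \<in> e2"
        using cyc_at[OF cyc[OF C1(1)]] by blast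
      moreover have "z \<notin> eac" "z \<notin> eNa" using zz memb by auto
      ultimately have "e1 \<in> D" "e2 \<in> D" unfolding D_def by blast+
      then show ?thesis using e by blast
    qed
    have H2': "\<exists>f1\<in>D. \<exists>f2\<in>D. f1 \<noteq> f2 \<and> z \<in> f1 \<and> z \<in> f2" if zz: "z \<in> \<Union>C2" "z \<noteq> ?b" "z \<noteq> ?c" "z \<noteq> ?N" for z
    proof -
      obtain e0 where "e0 \<in> C2" "z \<in> e0" using zz by blast
      then obtain e1 e2 where e: "e1 \<in> C2" "e2 \<in> C2" "e1 \<noteq> e2" "z \<in> e1" "z \<in> e2"
        using cyc_at[OF cyc[OF C2(1)]] by blast
      moreover have "z \<notin> ebc" "z \<notin> eNb" using zz memb by auto
      ultimately have "e1 \<in> D" "e2 \<in> D" unfolding D_def by blast+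
      then show ?thesis using e by blast
    qed
    have md: "\<forall>z\<in>\<Union>D. \<exists>e1\<in>D. \<exists>e2\<in>D. e1 \<noteq> e2 \<and> z \<in> e1 \<and> z \<in> e2"
    proof
      fix z assume z: "z \<in> \<Union>D"
      then have zab: "z \<noteq> ?a" "z \<noteq> ?b" using DJ noa nob by blast+
      have zC: "z \<in> \<Union>C1 \<or> z \<in> \<Union>C2" using z unfolding D_def by blast
      have cN1: "?c \<in> \<Union>C1" "?N \<in> \<Union>C1" using R1 memb by blast+
      have cN2: "?c \<in> \<Union>C2" "?N \<in> \<Union>C2" using R2 memb by blast+
      show "\<exists>e1\<in>D. \<exists>e2\<in>D. e1 \<noteq> e2 \<and> z \<in> e1 \<and> z \<in> e2"
      proof (cases "z \<in> \<Union>C1 \<and> z \<in> \<Union>C2")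
        case True
        obtain f1 where f1: "f1 \<in> C1 - {eac,eNa}" "z \<in> f1" using H1 True zab by blast
        obtain f2 where f2: "f2 \<in> C2 - {ebc,eNb}" "z \<in> f2" using H2 True zab by blast
        have "f1 \<noteq> f2" using f1 f2 C12 by blast
        then show ?thesis using f1 f2 unfolding D_def by blast
      next
        case False
        show ?thesis
        proof (cases "z \<in> \<Union>C1")
          case True
          then have "z \<notin> \<Union>C2" using False by blast
          then have "z \<noteq> ?c" "z \<noteq> ?N" using cN2 by (metis)+
          then show ?thesis using H1' True zab by blast
        next
          case F2: False
          then have "z \<in> \<Union>C2" using zC by blast
          moreover have "z \<noteq> ?c" "z \<noteq> ?N" using cN1 F2 by (metis)+
          ultimately show ?thesis using H2' zab by blast
        qed
      qed
    qed
    have Dne: "D \<noteq> {}"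
    proof -
      have "?N \<in> \<Union>C1" using R1 memb by blast
      then obtain f where "f \<in> C1 - {eac,eNa}" using H1 by blast
      then show ?thesis unfolding D_def by blast
    qed
    have fD: "finite D" using DJ join_fin[of V E] tcg_basic[OF step.hyps(1)] tcg_sub[OF step.hyps(1)]
      by (meson finite_subset)
    have two: "\<forall>e\<in>D. \<exists>u v. u \<noteq> v \<and> e = {u, v}"
      using DJ join_two[of V E] tcg_basic[OF step.hyps(1)] by blast
    obtain Cs where Cs: "is_cycle D Cs" using mindeg_cycle[OF fD two Dne md] by blast
    have CsJ: "is_cycle ?J Cs" using Cs is_cycle_subE[OF Cs] DJ is_cycle_sub by blast
    have CsD: "Cs \<subseteq> C1 \<union> C2" using is_cycle_subE[OF Cs] unfolding D_def by blast
    have C1n: "C1 \<notin> C1s" using R1(2) noa memb unfolding C1s_def by blast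
    have C2n: "C2 \<notin> C1s" using R2(2) nob memb unfolding C1s_def by blast
    have disCs: "Cs \<inter> C = {}" if "C \<in> C1s" for C
    proof -
      have "C \<in> \<C>" "C \<noteq> C1" "C \<noteq> C2" using that C1n C2n unfolding C1s_def by auto
      then have "C \<inter> C1 = {}" "C \<inter> C2 = {}" using dis C1(1) C2(1) by blast+
      then show ?thesis using CsD by blast
    qed
    have CsN: "Cs \<notin> C1s"
    proof
      assume "Cs \<in> C1s"
      then have "Cs \<inter> Cs = {}" by (rule disCs)
      then show False using cyc_ne[OF Cs] by blast
    qed
    have "insert Cs C1s \<subseteq> {C. is_cycle ?J C}" using C1cyc CsJ by blast
    moreover have "pairwise disjnt (insert Cs C1s)"
      using C1dis disCs unfolding pairwise_insert disjnt_def by blast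
    ultimately have "card (insert Cs C1s) \<le> k" by (rule step.IH)
    then have "card C1s + 1 \<le> k" using CsN fC1(1) by simp
    then show ?thesis using cardC cardAB by linarith
  qed
qed

definition nonint :: "('a \<Rightarrow> real) \<Rightarrow> 'a set set \<Rightarrow> bool" where
  "nonint f E \<longleftrightarrow> (\<forall>u v u' v'. {u,v} \<in> E \<longrightarrow> {u',v'} \<in> E \<longrightarrow> \<not> (f u < f u' \<and> f u' < f v \<and> f v < f v'))"

lemma gap_exists:
  fixes f :: "'a \<Rightarrow> real"
  assumes "finite V"
  shows "\<exists>d>0. \<forall>x\<in>V. f x \<le> t \<or> t + 3 * d < f x"
proof (cases "{f x - t | x. x \<in> V \<and> f x > t} = {}")
  case True
  then show ?thesis by (intro exI[of _ 1]) force
next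
  case False
  let ?S = "{f x - t | x. x \<in> V \<and> f x > t}"
  have fS: "finite ?S" using assms by simp
  have pos: "Min ?S > 0" using fS False by auto
  show ?thesis
  proof (intro exI[of _ "Min ?S / 4"] conjI ballI)
    show "Min ?S / 4 > 0" using pos by simp
    fix x assume x: "x \<in> V"
    show "f x \<le> t \<or> t + 3 * (Min ?S / 4) < f x"
    proof (cases "f x > t")
      case True
      then have "f x - t \<in> ?S" using x by blast
      then have "Min ?S \<le> f x - t" using fS by simp
      then show ?thesis using pos by simp
    qed simp
  qed
qed

lemma pigeon_abc: "u \<in> {a,b,c} \<Longrightarrow> v \<in> {a,b,c} \<Longrightarrow> u' \<in> {a,b,c} \<Longrightarrow> v' \<in> {a,b,c} \<Longrightarrow>
  u \<noteq> v \<Longrightarrow> u \<noteq> u' \<Longrightarrow> u \<noteq> v' \<Longrightarrow> v \<noteq> u' \<Longrightarrow> v \<noteq> v' \<Longrightarrow> u' \<noteq> v' \<Longrightarrow> False"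
  by blast

lemma tcg_order: "tcg V E k \<Longrightarrow> \<exists>f. inj_on f V \<and> nonint f E"
proof (induction rule: tcg.induct)
  case (base v)
  show ?case by (intro exI[of _ "\<lambda>_. 0"]) (simp add: nonint_def)
next
  case (step V E k c a b)
  obtain f where f: "inj_on f V" "nonint f E" using step.IH by blast
  have fV: "finite V" using tcg_basic[OF step.hyps(1)] by simp
  obtain d where d: "d > 0" "\<forall>x\<in>V. f x \<le> f c \<or> f c + 3 * d < f x" using gap_exists[OF fV] by blast
  define g where "g = f(a := f c + d, b := f c + 2 * d)"
  have ab: "a \<noteq> b" "a \<noteq> c" "b \<noteq> c" using step.hyps by auto
  have gV: "\<And>x. x \<in> V \<Longrightarrow> g x = f x" using step.hyps unfolding g_def by auto
  have ga: "g a = f c + d" and gb: "g b = f c + 2 * d" and gc: "g c = f c"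
    using ab unfolding g_def by auto
  have gT: "\<And>x. x \<in> {a,b,c} \<Longrightarrow> f c \<le> g x \<and> g x \<le> f c + 2 * d"
    using ga gb gc d(1) by auto
  have inj: "inj_on g (V \<union> {a, b})"
  proof (rule inj_onI)
    fix x y assume xy: "x \<in> V \<union> {a,b}" "y \<in> V \<union> {a,b}" "g x = g y"
    show "x = y"
    proof (cases "x \<in> V")
      case xV: True
      show ?thesis
      proof (cases "y \<in> V")
        case True then show ?thesis using xV xy f(1) gV by (metis inj_onD)
      next
        case False
        then have "y = a \<or> y = b" using xy by blast
        then show ?thesis using xy(3) gV[OF xV] ga gb d xV by fastforce
      qed
    next
      case xV: False
      then have x: "x = a \<or> x = b" using xy by blast
      show ?thesis
      proof (cases "y \<in> V")
        case True
        then show ?thesis using xy(3) gV[OF True] ga gb d x by fastforce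
      next
        case False
        then have "y = a \<or> y = b" using xy by blast
        then show ?thesis using x xy(3) ga gb d by auto
      qed
    qed
  qed
  have EV: "\<And>u v. {u,v} \<in> E \<Longrightarrow> u \<in> V \<and> v \<in> V" using tcg_sub[OF step.hyps(1)] by blast
  have cls: "({u,v} \<in> E \<and> u \<in> V \<and> v \<in> V) \<or> (u \<in> {a,b,c} \<and> v \<in> {a,b,c})"
    if "{u,v} \<in> E \<union> {{a, b}, {a, c}, {b, c}}" for u v
  proof (cases "{u,v} \<in> E")
    case True then show ?thesis using EV by blast
  next
    case False
    then have "{u,v} = {a,b} \<or> {u,v} = {a,c} \<or> {u,v} = {b,c}" using that by blast
    then show ?thesis by (auto simp: doubleton_eq_iff)
  qed
  have "nonint g (E \<union> {{a, b}, {a, c}, {b, c}})"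
    unfolding nonint_def
  proof (intro allI impI notI)
    fix u v u' v'
    assume e1: "{u,v} \<in> E \<union> {{a, b}, {a, c}, {b, c}}" and e2: "{u',v'} \<in> E \<union> {{a, b}, {a, c}, {b, c}}"
      and ch: "g u < g u' \<and> g u' < g v \<and> g v < g v'"
    show False
    proof (cases "{u,v} \<in> E \<and> u \<in> V \<and> v \<in> V")
      case o1: True
      show ?thesis
      proof (cases "{u',v'} \<in> E \<and> u' \<in> V \<and> v' \<in> V")
        case True
        then show ?thesis using o1 ch f(2) gV unfolding nonint_def by metis
      next
        case False
        then have "u' \<in> {a,b,c}" "v' \<in> {a,b,c}" using cls[OF e2] by auto
        then have "f c \<le> g u'" "g v' \<le> f c + 2 * d" using gT by auto
        moreover have "f v \<le> f c \<or> f c + 3 * d < f v" using d(2) o1 by blast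
        ultimately show ?thesis using ch gV o1 d(1) by auto
      qed
    next
      case n1: False
      then have uv: "u \<in> {a,b,c}" "v \<in> {a,b,c}" using cls[OF e1] by auto
      then have b1: "f c \<le> g u" "g v \<le> f c + 2 * d" using gT by auto
      show ?thesis
      proof (cases "{u',v'} \<in> E \<and> u' \<in> V \<and> v' \<in> V")
        case True
        have "f u' \<le> f c \<or> f c + 3 * d < f u'" using d(2) True by blast
        then show ?thesis using ch gV True b1 by auto
      next
        case False
        then have "u' \<in> {a,b,c}" "v' \<in> {a,b,c}" using cls[OF e2] by auto
        moreover have "u \<noteq> v" "u \<noteq> u'" "u \<noteq> v'" "v \<noteq> u'" "v \<noteq> v'" "u' \<noteq> v'" using ch by auto
        ultimately show ?thesis using uv pigeon_abc by metis
      qed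
    qed
  qed
  then show ?case using inj by blast
qed

lemma chord_pt:
  assumes "z \<in> closed_segment (Complex a (a^2)) (Complex b (b^2))"
  shows "Im z = (a + b) * Re z - a * b \<and> min a b \<le> Re z \<and> Re z \<le> max a b"
proof -
  obtain u where u: "0 \<le> u" "u \<le> 1" "z = (1 - u) *\<^sub>R Complex a (a^2) + u *\<^sub>R Complex b (b^2)"
    using assms in_segment(1) by blast
  have re: "Re z = (1 - u) * a + u * b" and im: "Im z = (1 - u) * a^2 + u * b^2" using u(3) by simp_all
  have "Im z = (a + b) * Re z - a * b" unfolding re im by (simp add: algebra_simps power2_eq_square)
  moreover have "min a b \<le> Re z"
  proof -
    have "(1 - u) * min a b + u * min a b \<le> (1 - u) * a + u * b"
      using u(1,2) by (intro add_mono mult_left_mono) auto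
    then show ?thesis unfolding re by (simp add: algebra_simps)
  qed
  moreover have "Re z \<le> max a b"
  proof -
    have "(1 - u) * a + u * b \<le> (1 - u) * max a b + u * max a b"
      using u(1,2) by (intro add_mono mult_left_mono) auto
    then show ?thesis unfolding re by (simp add: algebra_simps)
  qed
  ultimately show ?thesis by simp
qed

lemma apex_pt:
  assumes "z \<in> closed_segment (Complex 0 (-M)) (Complex s (s^2))"
  shows "\<exists>u. 0 \<le> u \<and> u \<le> 1 \<and> Re z = u * s \<and> Im z = - M + u * (s^2 + M)"
proof -
  obtain u where u: "0 \<le> u" "u \<le> 1" "z = (1 - u) *\<^sub>R Complex 0 (-M) + u *\<^sub>R Complex s (s^2)"
    using assms in_segment(1) by blast
  have "Re z = u * s" unfolding u(3) by simp
  moreover have "Im z = - M + u * (s^2 + M)" unfolding u(3) by (simp add: algebra_simps)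
  ultimately show ?thesis using u(1,2) by blast
qed

lemma chord_above:
  assumes "z \<in> closed_segment (Complex a (a^2)) (Complex b (b^2))"
  shows "(Re z)^2 \<le> Im z"
proof -
  have h: "Im z = (a + b) * Re z - a * b" "min a b \<le> Re z" "Re z \<le> max a b" using chord_pt[OF assms] by auto
  have "(Re z - a) * (Re z - b) \<le> 0" using h(2,3)
    by (cases "a \<le> b") (auto simp: mult_le_0_iff)
  then show ?thesis using h(1) by (simp add: algebra_simps power2_eq_square)
qed

lemma chord_vertex:
  assumes "z \<in> closed_segment (Complex a (a^2)) (Complex b (b^2))" "Im z = (Re z)^2"
  shows "Re z = a \<or> Re z = b"
proof -
  have h: "Im z = (a + b) * Re z - a * b" using chord_pt[OF assms(1)] by auto
  have "(Re z - a) * (Re z - b) = 0" using h assms(2) by (simp add: algebra_simps power2_eq_square)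
  then show ?thesis by simp
qed

lemma apex_above:
  assumes "z \<in> closed_segment (Complex 0 (-M)) (Complex s (s^2))" "s^2 < M" "(Re z)^2 \<le> Im z"
  shows "z = Complex s (s^2)"
proof -
  obtain u where u: "0 \<le> u" "u \<le> 1" "Re z = u * s" "Im z = - M + u * (s^2 + M)" using apex_pt[OF assms(1)] by blast
  have "(u * s)^2 \<le> - M + u * (s^2 + M)" using assms(3) u by simp
  then have k: "(1 - u) * (u * s^2 - M) \<ge> 0" by (simp add: algebra_simps power2_eq_square)
  have "u * s^2 \<le> s^2" using u(1,2) mult_left_le_one_le[of "s^2" u] by simp
  then have "u * s^2 - M < 0" using assms(2) by simp
  then have "1 - u \<le> 0" using k by (simp add: zero_le_mult_iff)
  then have "u = 1" using u by simp
  then show ?thesis using u by (simp add: complex_eq_iff)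
qed

lemma apex_apex:
  assumes "z \<in> closed_segment (Complex 0 (-M)) (Complex s (s^2))"
    "z \<in> closed_segment (Complex 0 (-M)) (Complex r (r^2))"
    "s \<noteq> r" "s^2 < M" "r^2 < M"
  shows "z = Complex 0 (-M)"
proof -
  obtain u where u: "0 \<le> u" "u \<le> 1" "Re z = u * s" "Im z = - M + u * (s^2 + M)" using apex_pt[OF assms(1)] by blast
  obtain w where w: "0 \<le> w" "w \<le> 1" "Re z = w * r" "Im z = - M + w * (r^2 + M)" using apex_pt[OF assms(2)] by blast
  have e1: "u * s = w * r" and e2: "u * (s^2 + M) = w * (r^2 + M)" using u w by auto
  have "u * (s^2 + M) * r = (w * r) * (r^2 + M)" using e2 by (simp add: algebra_simps)
  then have "u * (s^2 + M) * r = (u * s) * (r^2 + M)" using e1 by simp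
  then have "u * ((s - r) * (s * r - M)) = 0" by (simp add: algebra_simps power2_eq_square)
  moreover have "s * r < M"
  proof -
    have "2 * (s * r) \<le> s^2 + r^2" using sum_squares_bound[of s r] by simp
    then show ?thesis using assms(4,5) by simp
  qed
  ultimately have "u = 0" using assms(3) by simp
  then have "w * (r^2 + M) = 0" using e2 by simp
  moreover have "r^2 + M > 0" using assms(5) by (smt (verit) zero_le_power2)
  ultimately have "w = 0" by simp
  then show ?thesis using w by (simp add: complex_eq_iff)
qed

lemma chord_chord_real:
  fixes a b c d X :: real
  assumes "a < b" "c < d" "a \<le> X" "X \<le> b" "c \<le> X" "X \<le> d"
    "(a + b) * X - a * b = (c + d) * X - c * d"
    "\<not> (a < c \<and> c < b \<and> b < d)" "\<not> (c < a \<and> a < d \<and> d < b)" "\<not> (a = c \<and> b = d)"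
  shows "(X = a \<or> X = b) \<and> (X = c \<or> X = d)"
proof (cases "b \<le> c")
  case True then show ?thesis using assms by auto
next
  case F1: False
  show ?thesis
  proof (cases "d \<le> a")
    case True then show ?thesis using assms by auto
  next
    case F2: False
    have nest: "(a \<le> c \<and> d \<le> b) \<or> (c \<le> a \<and> b \<le> d)" using assms F1 F2 by linarith
    have key: "(X - c) * (d - b) + (c - a) * (X - d) + (c - a) * (d - b) = 0"
      using assms(7) by (simp add: algebra_simps)
    show ?thesis
    proof (cases "a \<le> c \<and> d \<le> b")
      case True
      have t1: "(X - c) * (d - b) \<le> 0" using True assms by (simp add: mult_nonneg_nonpos)
      have t2: "(c - a) * (X - d) \<le> 0" using True assms by (simp add: mult_nonneg_nonpos)
      have t3: "(c - a) * (d - b) \<le> 0" using True assms by (simp add: mult_nonneg_nonpos)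
      have z1: "(X - c) * (d - b) = 0" "(c - a) * (X - d) = 0" "(c - a) * (d - b) = 0"
        using key t1 t2 t3 by linarith+
      show ?thesis
      proof (cases "c = a")
        case True
        then have "d \<noteq> b" using assms(10) by auto
        then have "X = c" using z1(1) by simp
        then show ?thesis using True by simp
      next
        case False
        then have "d = b" using z1(3) by simp
        moreover have "X = d" using z1(2) False by simp
        ultimately show ?thesis by simp
      qed
    next
      case False
      then have T: "c \<le> a \<and> b \<le> d" using nest by blast
      have key2: "(X - a) * (b - d) + (a - c) * (X - b) + (a - c) * (b - d) = 0"
        using assms(7) by (simp add: algebra_simps)
      have t1: "(X - a) * (b - d) \<le> 0" using T assms by (simp add: mult_nonneg_nonpos)
      have t2: "(a - c) * (X - b) \<le> 0" using T assms by (simp add: mult_nonneg_nonpos)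
      have t3: "(a - c) * (b - d) \<le> 0" using T assms by (simp add: mult_nonneg_nonpos)
      have z1: "(X - a) * (b - d) = 0" "(a - c) * (X - b) = 0" "(a - c) * (b - d) = 0"
        using key2 t1 t2 t3 by linarith+
      show ?thesis
      proof (cases "c = a")
        case True
        then have "d \<noteq> b" using assms(10) by auto
        then have "X = a" using z1(1) by simp
        then show ?thesis using True by simp
      next
        case False
        then have "d = b" using z1(3) by simp
        moreover have "X = b" using z1(2) False by simp
        ultimately show ?thesis by simp
      qed
    qed
  qed
qed

lemma join_cases:
  assumes "simple_graph V E" "e \<in> join_K1_E V E"
  shows "(\<exists>s\<in>V. e = {None, Some s}) \<or> (\<exists>u w. {u,w} \<in> E \<and> u \<noteq> w \<and> u \<in> V \<and> w \<in> V \<and> e = {Some u, Some w})"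
proof (cases "e \<in> image Some ` E")
  case True
  then obtain e' where e': "e' \<in> E" "e = Some ` e'" by blast
  then obtain u w where "u \<noteq> w" "u \<in> V" "w \<in> V" "e' = {u,w}" using simple_edge[OF assms(1)] by blast
  then show ?thesis using e' by auto
next
  case False
  then show ?thesis using assms(2) unfolding join_K1_E_def by blast
qed

theorem planar_join:
  fixes f :: "'a \<Rightarrow> real"
  assumes sg: "simple_graph V E" and inj: "inj_on f V" and ni: "nonint f E"
  shows "planar (join_K1_V V) (join_K1_E V E)"
proof -
  have fV: "finite V" using sg unfolding simple_graph_def by simp
  define M where "M = 1 + (\<Sum>v\<in>V. (f v)^2)"
  have Mv: "(f v)^2 < M" if "v \<in> V" for v
  proof -
    have "(f v)^2 \<le> (\<Sum>v\<in>V. (f v)^2)" using member_le_sum[of v V "\<lambda>v. (f v)^2"] that fV by simp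
    then show ?thesis unfolding M_def by simp
  qed
  have M0: "M > 0" unfolding M_def by (smt (verit) sum_nonneg zero_le_power2)
  define P where "P = (\<lambda>x::real. Complex x (x^2))"
  define A where "A = Complex 0 (-M)"
  define p where "p = (\<lambda>x. case x of None \<Rightarrow> A | Some v \<Rightarrow> P (f v))"
  define pick where "pick = (\<lambda>e::'a option set. SOME uw. e = {fst uw, snd uw} \<and> fst uw \<noteq> snd uw)"
  define \<gamma> where "\<gamma> = (\<lambda>e. linepath (p (fst (pick e))) (p (snd (pick e))))"
  let ?VG = "join_K1_V V" and ?EG = "join_K1_E V E"
  have pN: "p None = A" and pS: "\<And>v. p (Some v) = P (f v)" unfolding p_def by simp_all
  have pickp: "e = {fst (pick e), snd (pick e)} \<and> fst (pick e) \<noteq> snd (pick e)" if ee: "e \<in> ?EG" for e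
  proof -
    obtain u w where "u \<noteq> w" "e = {u, w}" using join_two[OF sg ee] by blast
    then have "\<exists>uw. e = {fst uw, snd uw} \<and> fst uw \<noteq> snd uw" by (intro exI[of _ "(u,w)"]) simp
    then show ?thesis unfolding pick_def by (rule someI_ex)
  qed
  have EGsub: "e \<subseteq> ?VG" if "e \<in> ?EG" for e
    using join_edge_sub[of E V e] simple_sub[OF sg] that by blast
  have injp: "inj_on p ?VG"
  proof (rule inj_onI)
    fix x y assume xy: "x \<in> ?VG" "y \<in> ?VG" "p x = p y"
    show "x = y"
    proof (cases x)
      case None
      show ?thesis
      proof (cases y)
        case (Some r)
        then have "Im (p x) = -M" "Im (p y) = (f r)^2" using None unfolding p_def A_def P_def by simp_all
        then show ?thesis using xy(3) M0 by (smt (verit) zero_le_power2)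
      qed (use None in simp)
    next
      case (Some s)
      show ?thesis
      proof (cases y)
        case None
        then have "Im (p y) = -M" "Im (p x) = (f s)^2" using Some unfolding p_def A_def P_def by simp_all
        then show ?thesis using xy(3) M0 by (smt (verit) zero_le_power2)
      next
        case (Some r)
        have "s \<in> V" "r \<in> V" using xy(1,2) \<open>x = Some s\<close> Some unfolding join_K1_V_def by auto
        moreover have "f s = f r" using xy(3) \<open>x = Some s\<close> Some unfolding p_def P_def by simp
        ultimately show ?thesis using inj \<open>x = Some s\<close> Some by (simp add: inj_on_eq_iff)
      qed
    qed
  qed
  have PI: "path_image (\<gamma> e) = closed_segment (p s) (p t)" if "e \<in> ?EG" "e = {s, t}" for e s t
  proof -
    have "{fst (pick e), snd (pick e)} = {s, t}" using pickp[OF that(1)] that(2) by simp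
    then have "(fst (pick e) = s \<and> snd (pick e) = t) \<or> (fst (pick e) = t \<and> snd (pick e) = s)"
      by (simp add: doubleton_eq_iff)
    then show ?thesis unfolding \<gamma>_def using closed_segment_commute by auto
  qed
  have apexseg: "path_image (\<gamma> e) = closed_segment A (P (f s))" if "e \<in> ?EG" "e = {None, Some s}" for e s
    using PI[OF that] pN pS by simp
  have chordseg: "path_image (\<gamma> e) = closed_segment (P (f u)) (P (f w))" if "e \<in> ?EG" "e = {Some u, Some w}" for e u w
    using PI[OF that] pS by simp
  show ?thesis
    unfolding planar_def
  proof (intro exI[of _ p] exI[of _ \<gamma>] conjI ballI impI)
    show "inj_on p ?VG" by (rule injp)
  next
    fix e assume e: "e \<in> ?EG"
    have pk: "e = {fst (pick e), snd (pick e)}" "fst (pick e) \<noteq> snd (pick e)" using pickp[OF e] by auto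
    have "fst (pick e) \<in> ?VG" "snd (pick e) \<in> ?VG" using EGsub[OF e] pk(1) by auto
    then have "p (fst (pick e)) \<noteq> p (snd (pick e))" using injp pk(2) by (meson inj_on_eq_iff)
    then show "arc (\<gamma> e)" unfolding \<gamma>_def by simp
    show "{pathstart (\<gamma> e), pathfinish (\<gamma> e)} = p ` e" unfolding \<gamma>_def
      by (subst pk(1)) simp
  next
    fix e v assume e: "e \<in> ?EG" and v: "v \<in> ?VG" and pv: "p v \<in> path_image (\<gamma> e)"
    show "v \<in> e"
    proof (cases "\<exists>s\<in>V. e = {None, Some s}")
      case True
      then obtain s where s: "s \<in> V" "e = {None, Some s}" by blast
      show ?thesis
      proof (cases v)
        case None then show ?thesis using s by simp
      next
        case (Some r)
        have r: "r \<in> V" using v Some unfolding join_K1_V_def by auto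
        have "P (f r) \<in> closed_segment A (P (f s))" using pv apexseg[OF e s(2)] Some pS by simp
        moreover have "(Re (P (f r)))^2 \<le> Im (P (f r))" unfolding P_def by simp
        ultimately have "P (f r) = P (f s)" using apex_above[of "P (f r)" M "f s"] Mv[OF s(1)]
          unfolding P_def A_def by simp
        then have "f r = f s" unfolding P_def by simp
        then have "r = s" using inj r s(1) by (simp add: inj_on_eq_iff)
        then show ?thesis using s Some by simp
      qed
    next
      case False
      then obtain u w where uw: "{u,w} \<in> E" "u \<in> V" "w \<in> V" "e = {Some u, Some w}" using join_cases[OF sg e] by blast
      have seg: "p v \<in> closed_segment (P (f u)) (P (f w))" using pv chordseg[OF e uw(4)] by simp
      show ?thesis
      proof (cases v)
        case None
        then have "(Re A)^2 \<le> Im A" using chord_above[of "p v" "f u" "f w"] seg pN unfolding P_def by simp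
        then show ?thesis unfolding A_def using M0 by simp
      next
        case (Some r)
        have r: "r \<in> V" using v Some unfolding join_K1_V_def by auto
        have "Re (P (f r)) = f u \<or> Re (P (f r)) = f w"
          using chord_vertex[of "P (f r)" "f u" "f w"] seg Some pS unfolding P_def by simp
        then have "f r = f u \<or> f r = f w" unfolding P_def by simp
        then have "r = u \<or> r = w" using inj r uw(2,3) by (auto simp: inj_on_eq_iff)
        then show ?thesis using uw(4) Some by auto
      qed
    qed
  next
    fix e e' assume e: "e \<in> ?EG" and e': "e' \<in> ?EG" and ne: "e \<noteq> e'"
    show "path_image (\<gamma> e) \<inter> path_image (\<gamma> e') \<subseteq> p ` (e \<inter> e')"
    proof
      fix z assume z: "z \<in> path_image (\<gamma> e) \<inter> path_image (\<gamma> e')"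
      have z1: "z \<in> path_image (\<gamma> e)" and z2: "z \<in> path_image (\<gamma> e')" using z by auto
      have ac: "z \<in> p ` (e1 \<inter> e2)"
        if ae: "e1 \<in> ?EG" "s \<in> V" "e1 = {None, Some s}" and ce: "e2 \<in> ?EG" "u \<in> V" "w \<in> V" "e2 = {Some u, Some w}"
          and za: "z \<in> path_image (\<gamma> e1)" and zc: "z \<in> path_image (\<gamma> e2)" for e1 e2 s u w
      proof -
        have sa: "z \<in> closed_segment (Complex 0 (-M)) (Complex (f s) ((f s)^2))"
          using za apexseg[OF ae(1,3)] unfolding A_def P_def by simp
        have sc: "z \<in> closed_segment (Complex (f u) ((f u)^2)) (Complex (f w) ((f w)^2))"
          using zc chordseg[OF ce(1,4)] unfolding P_def by simp
        have "(Re z)^2 \<le> Im z" using chord_above[OF sc] .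
        then have zs: "z = Complex (f s) ((f s)^2)" using apex_above[OF sa Mv[OF ae(2)]] by simp
        then have "Re z = f u \<or> Re z = f w" using chord_vertex[OF sc] by simp
        then have "f s = f u \<or> f s = f w" using zs by simp
        then have "s = u \<or> s = w" using inj ae(2) ce(2,3) by (auto simp: inj_on_eq_iff)
        then have "Some s \<in> e1 \<inter> e2" using ae(3) ce(4) by auto
        moreover have "z = p (Some s)" using zs pS unfolding P_def by simp
        ultimately show ?thesis by blast
      qed
      have orient: "\<exists>u1 w1. {u1,w1} \<in> E \<and> u1 \<in> V \<and> w1 \<in> V \<and> f u1 < f w1 \<and> e2 = {Some u1, Some w1}"
        if "{u,w} \<in> E" "u \<noteq> w" "u \<in> V" "w \<in> V" "e2 = {Some u, Some w}" for e2 u w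
      proof -
        have "f u \<noteq> f w" using inj that(2-4) by (auto simp: inj_on_eq_iff)
        then show ?thesis
        proof (cases "f u < f w")
          case True then show ?thesis using that by blast
        next
          case False
          then have "f w < f u" using \<open>f u \<noteq> f w\<close> by simp
          moreover have "{w,u} \<in> E" using that(1) by (simp add: insert_commute)
          moreover have "e2 = {Some w, Some u}" using that(5) by auto
          ultimately show ?thesis using that by blast
        qed
      qed
      show "z \<in> p ` (e \<inter> e')"
      proof (cases "\<exists>s\<in>V. e = {None, Some s}")
        case T1: True
        then obtain s where s: "s \<in> V" "e = {None, Some s}" by blast
        show ?thesis
        proof (cases "\<exists>r\<in>V. e' = {None, Some r}")
          case True
          then obtain r where r: "r \<in> V" "e' = {None, Some r}" by blast
          have "s \<noteq> r" using ne s r by auto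
          then have "f s \<noteq> f r" using inj s(1) r(1) by (auto simp: inj_on_eq_iff)
          moreover have "z \<in> closed_segment (Complex 0 (-M)) (Complex (f s) ((f s)^2))"
            using z1 apexseg[OF e s(2)] unfolding A_def P_def by simp
          moreover have "z \<in> closed_segment (Complex 0 (-M)) (Complex (f r) ((f r)^2))"
            using z2 apexseg[OF e' r(2)] unfolding A_def P_def by simp
          ultimately have "z = A" using apex_apex Mv[OF s(1)] Mv[OF r(1)] unfolding A_def by blast
          moreover have "None \<in> e \<inter> e'" using s r by simp
          ultimately show ?thesis using pN by force
        next
          case False
          then obtain u w where uw: "{u,w} \<in> E" "u \<in> V" "w \<in> V" "e' = {Some u, Some w}"
            using join_cases[OF sg e'] by blast
          show ?thesis using ac[OF e s(1) s(2) e' uw(2,3,4) z1 z2] .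
        qed
      next
        case F1: False
        then obtain u w where uw: "{u,w} \<in> E" "u \<noteq> w" "u \<in> V" "w \<in> V" "e = {Some u, Some w}"
          using join_cases[OF sg e] by blast
        show ?thesis
        proof (cases "\<exists>r\<in>V. e' = {None, Some r}")
          case True
          then obtain r where r: "r \<in> V" "e' = {None, Some r}" by blast
          have "z \<in> p ` (e' \<inter> e)" using ac[OF e' r(1) r(2) e uw(3,4,5) z2 z1] .
          then show ?thesis by (simp add: Int_commute)
        next
          case False
          then obtain u' w' where uw': "{u',w'} \<in> E" "u' \<noteq> w'" "u' \<in> V" "w' \<in> V" "e' = {Some u', Some w'}"
            using join_cases[OF sg e'] by blast
          obtain u1 w1 where o1: "{u1,w1} \<in> E" "u1 \<in> V" "w1 \<in> V" "f u1 < f w1" "e = {Some u1, Some w1}"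
            using orient[OF uw] by blast
          obtain u2 w2 where o2: "{u2,w2} \<in> E" "u2 \<in> V" "w2 \<in> V" "f u2 < f w2" "e' = {Some u2, Some w2}"
            using orient[OF uw'] by blast
          have sc1: "z \<in> closed_segment (Complex (f u1) ((f u1)^2)) (Complex (f w1) ((f w1)^2))"
            using z1 chordseg[OF e o1(5)] unfolding P_def by simp
          have sc2: "z \<in> closed_segment (Complex (f u2) ((f u2)^2)) (Complex (f w2) ((f w2)^2))"
            using z2 chordseg[OF e' o2(5)] unfolding P_def by simp
          have c1: "Im z = (f u1 + f w1) * Re z - f u1 * f w1" "f u1 \<le> Re z" "Re z \<le> f w1"
            using chord_pt[OF sc1] o1(4) by auto
          have c2: "Im z = (f u2 + f w2) * Re z - f u2 * f w2" "f u2 \<le> Re z" "Re z \<le> f w2"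
            using chord_pt[OF sc2] o2(4) by auto
          have n1: "\<not> (f u1 < f u2 \<and> f u2 < f w1 \<and> f w1 < f w2)" using ni o1(1) o2(1) unfolding nonint_def by blast
          have n2: "\<not> (f u2 < f u1 \<and> f u1 < f w2 \<and> f w2 < f w1)" using ni o1(1) o2(1) unfolding nonint_def by blast
          have n3: "\<not> (f u1 = f u2 \<and> f w1 = f w2)"
          proof
            assume "f u1 = f u2 \<and> f w1 = f w2"
            then have "u1 = u2" "w1 = w2" using inj o1(2,3) o2(2,3) by (auto simp: inj_on_eq_iff)
            then show False using ne o1(5) o2(5) by simp
          qed
          have X: "(Re z = f u1 \<or> Re z = f w1) \<and> (Re z = f u2 \<or> Re z = f w2)"
            using chord_chord_real[OF o1(4) o2(4) c1(2,3) c2(2,3) _ n1 n2 n3] c1(1) c2(1) by simp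
          obtain x where x: "x \<in> {u1, w1}" "f x = Re z"
          proof (cases "Re z = f u1")
            case True then show ?thesis using that[of u1] by simp
          next
            case False then show ?thesis using that[of w1] X by simp
          qed
          obtain y where y: "y \<in> {u2, w2}" "f y = Re z"
          proof (cases "Re z = f u2")
            case True then show ?thesis using that[of u2] by simp
          next
            case False then show ?thesis using that[of w2] X by simp
          qed
          have "x \<in> V" "y \<in> V" using x(1) y(1) o1(2,3) o2(2,3) by auto
          then have "x = y" using x(2) y(2) inj by (metis inj_onD)
          then have "Some x \<in> e \<inter> e'" using x y o1(5) o2(5) by auto
          moreover have "Im z = (Re z)^2" using c1(1) X by (auto simp: power2_eq_square algebra_simps)
          then have "z = p (Some x)" using x(2) pS unfolding P_def by (simp add: complex_eq_iff)
          ultimately show ?thesis by blast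
        qed
      qed
    qed
  qed
qed

theorem lemma2p1:
  fixes V :: "'a set" and E :: "'a set set"
  assumes "simple_graph V E" and "triangle_cactus V E"
  shows "planar (join_K1_V V) (join_K1_E V E) \<and>
         phi (join_K1_V V) (join_K1_E V E) = num_triangles V E"
proof -
  have con: "connected_graph V E" using assms(2) unfolding triangle_cactus_def by simp
  have tri: "\<forall>u v. {u,v} \<in> E \<longrightarrow> (\<exists>w. {u,w} \<in> E \<and> {v,w} \<in> E \<and> w \<noteq> u \<and> w \<noteq> v)"
    using cactus_tri[OF assms] by blast
  have nc: "\<forall>vs. distinct vs \<longrightarrow> 4 \<le> length vs \<longrightarrow> cyc_edges vs \<subseteq> E \<longrightarrow> False"
    using cactus_nocyc[OF assms] by blast
  obtain k where k: "tcg V E k" using struct_tcg[OF assms(1) con tri nc] by blast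
  obtain f where f: "inj_on f V" "nonint f E" using tcg_order[OF k] by blast
  have pl: "planar (join_K1_V V) (join_K1_E V E)" using planar_join[OF assms(1) f] .
  define S where "S = {card \<C> | \<C>. \<C> \<subseteq> {C. is_cycle (join_K1_E V E) C} \<and> pairwise disjnt \<C>}"
  have kS: "k \<in> S" using tcg_lower[OF k] unfolding S_def by blast
  have leS: "\<And>x. x \<in> S \<Longrightarrow> x \<le> k" using tcg_upper[OF k] unfolding S_def by blast
  have fS: "finite S" using leS by (meson finite_atMost atMost_iff finite_subset subsetI)
  have "Max S = k" using kS leS fS by (intro Max_eqI) auto
  then have "phi (join_K1_V V) (join_K1_E V E) = k" unfolding phi_def S_def by simp
  then show ?thesis using pl tcg_num_tri[OF k] by simp
qed

end
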